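(* Let $M$ be a closed rooted combinatorial map with $|M|$ edges, let $N$ be a rooted map, and let $k,\ell$ be integers for which the operations below are defined. Then $$\mathrm{Ins}_{M,\ell}\big(R_k(N)\big)=R_k\big(\mathrm{Ins}_{M,\ell-2}(N)\big)\quad\text{if }k\le \ell-2,$$ $$\mathrm{Ins}_{M,\ell}\big(R_k(N)\big)=R_{k+2|M|}\big(\mathrm{Ins}_{M,\ell-1}(N)\big)\quad\text{if }1\le \ell-1\le k.$$
   Context: A rooted combinatorial map is $(H,\sigma,\alpha,r)$: $H$ a finite set of half-edges, $\sigma$ a permutation, $\alpha$ an involution, $r$ a fixed point of $\alpha$ (the root), with $\langle\sigma,\alpha\rangle$ transitive; vertices are $\sigma$-orbits, edges are $\alpha$-orbits (fixed points of $\alpha$ are dangling edges); it is closed if $r$ is the only fixed point of $\alpha$. The size is the number of edges (root included). Maps are drawn so that $\sigma$ gives the counterclockwise cyclic order of half-edges around each vertex; a corner is the angular sector between a half-edge $h$ and $\sigma(h)$; the root corner lies between $r$ and $\sigma(r)$, and the root edge is the edge containing $\sigma(r)$. A map of size $n$ has $2n-1$ corners (the one-half-edge map has one corner, its root corner). Bridge First Labeling (BFL): working on a copy of the map, label the root corner $1$. If the current corner has label $k$, let $e$ be the (possibly dangling) edge adjacent to this corner in the counterclockwise order. If $e$ is a bridge of the current map, go along $e$ to the next corner (at its other endpoint) and label it $k+1$; if $e$ is dangling, go to the following corner counterclockwise and label it $k+1$; otherwise cut $e$ into two dangling edges, go to the following corner counterclockwise and label it $k+1$. Stop upon reaching the root.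 For a map $N$ of size $n$ and $1\le k\le 2n-1$, $R_k(N)$ is obtained by adding a new edge linking the root corner of $N$ and the $k$-th corner of the BFL of $N$ (the new edge becomes the root edge). For a map $M'$, $\mathrm{Ins}_{M',k}(N)$ is obtained by inserting $M'$ at the $k$-th BFL corner of $N$ via a bridge: the root of $M'$ is attached in that corner, becoming a bridge; the root of the result is that of $N$. *)

theory Defs
  imports Main
begin

text \<open>Rooted combinatorial maps with half-edges labelled by natural numbers.
  hes = set of half-edges H, sig = sigma (ccw successor around a vertex),
  alp = alpha (edge involution; fixed points are dangling half-edges), rt = root.
  Only the values of sig/alp on hes matter.\<close>

record cmap =
  hes :: "nat set"
  sig :: "nat \<Rightarrow> nat"
  alp :: "nat \<Rightarrow> nat"
  rt  :: nat

text \<open>The relation generated by sigma and alpha on H (transitivity of the group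
  generated by sigma and alpha = every half-edge reachable from every other).\<close>
definition step_rel :: "nat set \<Rightarrow> (nat \<Rightarrow> nat) \<Rightarrow> (nat \<Rightarrow> nat) \<Rightarrow> (nat \<times> nat) set" where
  "step_rel H s a = {(u, s u) | u. u \<in> H} \<union> {(u, a u) | u. u \<in> H}"

definition connected_hes :: "nat set \<Rightarrow> (nat \<Rightarrow> nat) \<Rightarrow> (nat \<Rightarrow> nat) \<Rightarrow> bool" where
  "connected_hes H s a \<longleftrightarrow> (\<forall>x\<in>H. \<forall>y\<in>H. (x, y) \<in> (step_rel H s a)\<^sup>*)"

definition is_rmap :: "cmap \<Rightarrow> bool" where
  "is_rmap M \<longleftrightarrow> finite (hes M) \<and> bij_betw (sig M) (hes M) (hes M)
     \<and> (\<forall>x\<in>hes M. alp M x \<in> hes M \<and> alp M (alp M x) = x)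
     \<and> rt M \<in> hes M \<and> alp M (rt M) = rt M
     \<and> connected_hes (hes M) (sig M) (alp M)"

definition closed_map :: "cmap \<Rightarrow> bool" where
  "closed_map M \<longleftrightarrow> (\<forall>x\<in>hes M. alp M x = x \<longrightarrow> x = rt M)"

definition msize :: "cmap \<Rightarrow> nat" where
  "msize M = card {{x, alp M x} | x. x \<in> hes M}"

text \<open>Corners: the corner between h and sigma h is identified with h, so the
  number of corners is the number of half-edges.\<close>
definition ncorners :: "cmap \<Rightarrow> nat" where
  "ncorners M = card (hes M)"

definition map_iso :: "cmap \<Rightarrow> cmap \<Rightarrow> bool" where
  "map_iso M1 M2 \<longleftrightarrow> (\<exists>\<phi>. bij_betw \<phi> (hes M1) (hes M2)
      \<and> (\<forall>x\<in>hes M1. \<phi> (sig M1 x) = sig M2 (\<phi> x) \<and> \<phi> (alp M1 x) = alp M2 (\<phi> x))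
      \<and> \<phi> (rt M1) = rt M2)"

text \<open>Bridge First Labelling. State = (current alpha of the working copy, current corner h).
  The edge adjacent (ccw) to corner h is the edge of g = sigma h.\<close>
definition cut_edge :: "(nat \<Rightarrow> nat) \<Rightarrow> nat \<Rightarrow> nat \<Rightarrow> nat" where
  "cut_edge a g = a(g := g, a g := a g)"

definition is_bridge :: "nat set \<Rightarrow> (nat \<Rightarrow> nat) \<Rightarrow> (nat \<Rightarrow> nat) \<Rightarrow> nat \<Rightarrow> bool" where
  "is_bridge H s a g \<longleftrightarrow> a g \<noteq> g \<and> \<not> connected_hes H s (cut_edge a g)"

definition bfl_step :: "cmap \<Rightarrow> (nat \<Rightarrow> nat) \<times> nat \<Rightarrow> (nat \<Rightarrow> nat) \<times> nat" where
  "bfl_step M st = (let a = fst st; g = sig M (snd st) in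
     if is_bridge (hes M) (sig M) a g then (a, a g)
     else if a g = g then (a, g)
     else (cut_edge a g, g))"

definition bfl_state :: "cmap \<Rightarrow> nat \<Rightarrow> (nat \<Rightarrow> nat) \<times> nat" where
  "bfl_state M i = (bfl_step M ^^ i) (alp M, rt M)"

definition bfl_len :: "cmap \<Rightarrow> nat" where
  "bfl_len M = (LEAST i. 0 < i \<and> snd (bfl_state M i) = rt M)"

text \<open>BFL as the list of visited corners (corner labelled j is at index j-1).\<close>
definition bfl :: "cmap \<Rightarrow> nat list" where
  "bfl M = map (\<lambda>i. snd (bfl_state M i)) [0..<bfl_len M]"

definition bfl_corner :: "cmap \<Rightarrow> nat \<Rightarrow> nat" where
  "bfl_corner M k = bfl M ! (k - 1)"

definition fresh :: "nat set \<Rightarrow> nat" where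
  "fresh H = Suc (Max (insert 0 H))"

text \<open>R_k(N): new edge {x,y}; x is inserted in the root corner (so sigma r = x and the
  new edge is the root edge), y in the k-th BFL corner c.\<close>
definition R_op :: "nat \<Rightarrow> cmap \<Rightarrow> cmap" where
  "R_op k N = (let c = bfl_corner N k; r = rt N; s = sig N; x = fresh (hes N); y = Suc x in
     \<lparr> hes = hes N \<union> {x, y},
       sig = (if c = r then s(r := x, x := y, y := s r)
              else s(r := x, x := s r, c := y, y := s c)),
       alp = (alp N)(x := y, y := x),
       rt = r \<rparr>)"

text \<open>Ins_{M,l}(N): a disjoint copy of M (half-edges shifted by off) is attached by a
  new half-edge z inserted in the l-th BFL corner c of N, z being paired with the root
  of M; the root is that of N.\<close>
definition Ins_op :: "cmap \<Rightarrow> nat \<Rightarrow> cmap \<Rightarrow> cmap" where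
  "Ins_op M l N = (let c = bfl_corner N l; off = fresh (hes N);
       HM = (\<lambda>u. off + u) ` hes M; z = off + fresh (hes M) in
     \<lparr> hes = hes N \<union> HM \<union> {z},
       sig = (\<lambda>u. if u \<in> HM then off + sig M (u - off)
                  else if u = c then z else if u = z then sig N c else sig N u),
       alp = (\<lambda>u. if u = off + rt M then z
                  else if u \<in> HM then off + alp M (u - off)
                  else if u = z then off + rt M else alp N u),
       rt = rt N \<rparr>)"

end

theory Submission
  imports Defs
begin

definition stp :: "nat set \<Rightarrow> (nat \<Rightarrow> nat) \<Rightarrow> (nat \<Rightarrow> nat) \<times> nat \<Rightarrow> (nat \<Rightarrow> nat) \<times> nat" where
  "stp H s st = (let a = fst st; g = s (snd st) in
     if is_bridge H s a g then (a, a g)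
     else if a g = g then (a, g)
     else (cut_edge a g, g))"

lemma bfl_step_stp: "bfl_step M = stp (hes M) (sig M)"
  by (rule ext) (simp add: bfl_step_def stp_def)

definition clos :: "nat set \<Rightarrow> (nat \<Rightarrow> nat) \<Rightarrow> (nat \<Rightarrow> nat) \<Rightarrow> nat set \<Rightarrow> bool" where
  "clos H s a S \<longleftrightarrow> S \<subseteq> H \<and> (\<forall>u\<in>S. s u \<in> S \<and> a u \<in> S)"

lemma conn_iff:
  assumes "\<forall>u\<in>H. s u \<in> H" "\<forall>u\<in>H. a u \<in> H"
  shows "connected_hes H s a \<longleftrightarrow> (\<forall>S. clos H s a S \<longrightarrow> S \<noteq> {} \<longrightarrow> S = H)"
proof
  assume c: "connected_hes H s a"
  show "\<forall>S. clos H s a S \<longrightarrow> S \<noteq> {} \<longrightarrow> S = H"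
  proof (intro allI impI)
    fix S assume cl: "clos H s a S" and ne: "S \<noteq> {}"
    then obtain x where x: "x \<in> S" by auto
    have "y \<in> S" if "y \<in> H" for y
    proof -
      have "x \<in> H" using x cl by (auto simp: clos_def)
      then have "(x, y) \<in> (step_rel H s a)\<^sup>*" using c that by (auto simp: connected_hes_def)
      then show ?thesis
      proof (induction rule: rtrancl_induct)
        case base then show ?case using x .
      next
        case (step y z) then show ?case using cl by (auto simp: step_rel_def clos_def)
      qed
    qed
    then show "S = H" using cl by (auto simp: clos_def)
  qed
next
  assume h: "\<forall>S. clos H s a S \<longrightarrow> S \<noteq> {} \<longrightarrow> S = H"
  show "connected_hes H s a"
    unfolding connected_hes_def
  proof (intro ballI)
    fix x y assume x: "x \<in> H" and y: "y \<in> H"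
    let ?S = "{z. (x, z) \<in> (step_rel H s a)\<^sup>*}"
    have sub: "?S \<subseteq> H"
    proof
      fix z assume "z \<in> ?S"
      then have "(x, z) \<in> (step_rel H s a)\<^sup>*" by simp
      then show "z \<in> H"
        by (induction rule: rtrancl_induct) (use x assms in \<open>auto simp: step_rel_def\<close>)
    qed
    have "clos H s a ?S"
      unfolding clos_def
    proof (intro conjI ballI sub)
      fix u assume u: "u \<in> ?S"
      then have "u \<in> H" using sub by auto
      then have "(u, s u) \<in> step_rel H s a" "(u, a u) \<in> step_rel H s a" by (auto simp: step_rel_def)
      then show "s u \<in> ?S" "a u \<in> ?S" using u by (auto intro: rtrancl_into_rtrancl)
    qed
    moreover have "?S \<noteq> {}" by auto
    ultimately have "?S = H" using h by blast
    then show "(x, y) \<in> (step_rel H s a)\<^sup>*" using y by auto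
  qed
qed

lemma conn_closD:
  assumes "connected_hes H s a" "\<forall>u\<in>H. s u \<in> H" "\<forall>u\<in>H. a u \<in> H" "clos H s a S" "S \<noteq> {}"
  shows "S = H"
  using assms conn_iff by blast

lemma conn_closI:
  assumes "\<forall>u\<in>H. s u \<in> H" "\<forall>u\<in>H. a u \<in> H"
    "\<And>S. clos H s a S \<Longrightarrow> S \<noteq> {} \<Longrightarrow> S = H"
  shows "connected_hes H s a"
  using assms conn_iff by blast

definition subal :: "nat set \<Rightarrow> (nat \<Rightarrow> nat) \<Rightarrow> (nat \<Rightarrow> nat) \<Rightarrow> bool" where
  "subal H a' a \<longleftrightarrow> (\<forall>u\<in>H. a' u = a u \<or> a' u = u)"

lemma conn_mono:
  assumes "connected_hes H s a'" "subal H a' a"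
    "\<forall>u\<in>H. s u \<in> H" "\<forall>u\<in>H. a u \<in> H" "\<forall>u\<in>H. a' u \<in> H"
  shows "connected_hes H s a"
proof (rule conn_closI[OF assms(3,4)])
  fix S assume "clos H s a S" "S \<noteq> {}"
  moreover have "clos H s a' S" using \<open>clos H s a S\<close> assms(2)
    unfolding clos_def subal_def by (metis subsetD)
  ultimately show "S = H" using conn_closD[OF assms(1,3,5)] by blast
qed

definition invol :: "nat set \<Rightarrow> (nat \<Rightarrow> nat) \<Rightarrow> bool" where
  "invol H a \<longleftrightarrow> (\<forall>u\<in>H. a u \<in> H \<and> a (a u) = u)"

lemma cut_edge_in: "invol H a \<Longrightarrow> u \<in> H \<Longrightarrow> cut_edge a g u \<in> H"
  by (auto simp: cut_edge_def invol_def)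

lemma cut_edge_invol: assumes "invol H a" "g \<in> H" shows "invol H (cut_edge a g)"
  unfolding invol_def
proof
  fix u assume u: "u \<in> H"
  have i: "a u \<in> H" "a (a u) = u" "a (a g) = g" using assms u by (auto simp: invol_def)
  show "cut_edge a g u \<in> H \<and> cut_edge a g (cut_edge a g u) = u"
  proof (cases "u = g \<or> u = a g")
    case True then show ?thesis using u by (auto simp: cut_edge_def)
  next
    case False
    then have "a u \<noteq> g" "a u \<noteq> a g" using i by metis+
    then show ?thesis using False i by (simp add: cut_edge_def)
  qed
qed

lemma cut_edge_subal: "subal H (cut_edge a g) a"
  by (auto simp: subal_def cut_edge_def)

lemma cut_edge_sym: "a (a g) = g \<Longrightarrow> cut_edge a (a g) = cut_edge a g"
  by (auto simp: cut_edge_def fun_eq_iff)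

lemma is_bridge_sym: "a (a g) = g \<Longrightarrow> is_bridge H s a (a g) = is_bridge H s a g"
  unfolding is_bridge_def using cut_edge_sym by metis

lemma bridge_persist:
  assumes "is_bridge H s a g" "a' g = a g" "subal H a' a" "g \<in> H"
    "\<forall>u\<in>H. s u \<in> H" "invol H a" "invol H a'"
  shows "is_bridge H s a' g"
proof -
  have sub: "subal H (cut_edge a' g) (cut_edge a g)"
    using assms(2,3) by (auto simp: subal_def cut_edge_def)
  have "\<not> connected_hes H s (cut_edge a g)" using assms(1) by (simp add: is_bridge_def)
  then have "\<not> connected_hes H s (cut_edge a' g)"
    using conn_mono[OF _ sub assms(5)] cut_edge_in[OF assms(6)] cut_edge_in[OF assms(7)] by blast
  then show ?thesis using assms(1,2) by (simp add: is_bridge_def)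
qed


lemma subal_trans: "subal H a2 a1 \<Longrightarrow> subal H a1 a0 \<Longrightarrow> subal H a2 a0"
  unfolding subal_def by metis

lemma subal_refl: "subal H a a" by (simp add: subal_def)

locale rm =
  fixes H :: "nat set" and s :: "nat \<Rightarrow> nat" and a0 :: "nat \<Rightarrow> nat" and r :: nat
  assumes fin: "finite H" and sb: "bij_betw s H H" and a0i: "invol H a0"
    and rH: "r \<in> H" and ar: "a0 r = r" and con: "connected_hes H s a0"
begin

definition st :: "nat \<Rightarrow> (nat \<Rightarrow> nat) \<times> nat" where
  "st i = (stp H s ^^ i) (a0, r)"

abbreviation al where "al i \<equiv> fst (st i)"
abbreviation cu where "cu i \<equiv> snd (st i)"

lemma sH: "u \<in> H \<Longrightarrow> s u \<in> H" using sb by (auto dest: bij_betwE)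
lemma sH': "\<forall>u\<in>H. s u \<in> H" using sH by blast

lemma st_Suc: "st (Suc i) = stp H s (st i)"
  by (simp add: st_def)

definition P :: "(nat \<Rightarrow> nat) \<times> nat \<Rightarrow> bool" where
  "P x \<longleftrightarrow> invol H (fst x) \<and> connected_hes H s (fst x) \<and> snd x \<in> H \<and> fst x r = r"

lemma P_step:
  assumes "P (a, h)"
  shows "P (stp H s (a, h)) \<and> subal H (fst (stp H s (a, h))) a
    \<and> (fst (stp H s (a, h)) = a \<or> (a (s h) \<noteq> s h \<and> \<not> is_bridge H s a (s h)
          \<and> fst (stp H s (a, h)) = cut_edge a (s h) \<and> snd (stp H s (a, h)) = s h))"
proof -
  have i: "invol H a" "connected_hes H s a" "h \<in> H" "a r = r" using assms by (auto simp: P_def)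
  let ?g = "s h"
  have g: "?g \<in> H" using i sH by auto
  have ag: "a ?g \<in> H" using i g by (auto simp: invol_def)
  show ?thesis
  proof (cases "is_bridge H s a ?g")
    case True then show ?thesis using i ag by (simp add: stp_def P_def subal_refl Let_def)
  next
    case nb: False
    show ?thesis
    proof (cases "a ?g = ?g")
      case True then show ?thesis using i nb g by (simp add: stp_def P_def subal_refl Let_def)
    next
      case False
      have c: "connected_hes H s (cut_edge a ?g)" using nb False by (simp add: is_bridge_def)
      have "cut_edge a ?g r = r"
      proof -
        have "r \<noteq> ?g" using False i by auto
        moreover have "r \<noteq> a ?g" using False i g by (metis invol_def)
        ultimately show ?thesis using i(4) by (simp add: cut_edge_def)
      qed
      then show ?thesis using i nb False g c cut_edge_invol[OF i(1) g] cut_edge_subal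
        by (simp add: stp_def P_def Let_def)
    qed
  qed
qed

lemma P_st: "P (st i)"
proof (induction i)
  case 0 then show ?case using a0i con rH ar by (simp add: st_def P_def)
next
  case (Suc i)
  then show ?case using P_step[of "al i" "cu i"] by (simp add: st_Suc)
qed

lemma al_invol: "invol H (al i)" using P_st[of i] by (simp add: P_def)
lemma al_con: "connected_hes H s (al i)" using P_st[of i] by (simp add: P_def)
lemma cu_H: "cu i \<in> H" using P_st[of i] by (simp add: P_def)
lemma al_r: "al i r = r" using P_st[of i] by (simp add: P_def)
lemma al_H: "u \<in> H \<Longrightarrow> al i u \<in> H" using al_invol by (simp add: invol_def)
lemma al_al: "u \<in> H \<Longrightarrow> al i (al i u) = u" using al_invol by (simp add: invol_def)

lemma step_cases: "al (Suc i) = al i \<or> (al i (s (cu i)) \<noteq> s (cu i) \<and> \<not> is_bridge H s (al i) (s (cu i))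
          \<and> al (Suc i) = cut_edge (al i) (s (cu i)) \<and> cu (Suc i) = s (cu i))"
  using P_step[of "al i" "cu i"] P_st[of i] by (simp add: st_Suc)

lemma subal_Suc: "subal H (al (Suc i)) (al i)"
  using P_step[of "al i" "cu i"] P_st[of i] by (simp add: st_Suc)

lemma subal_le: "i \<le> j \<Longrightarrow> subal H (al j) (al i)"
proof (induction j rule: dec_induct)
  case base then show ?case by (rule subal_refl)
next
  case (step j) then show ?case using subal_Suc subal_trans by blast
qed

lemma fixed_persist: "i \<le> j \<Longrightarrow> u \<in> H \<Longrightarrow> al i u = u \<Longrightarrow> al j u = u"
  using subal_le unfolding subal_def by metis

lemma bridge_persist_st:
  assumes "i \<le> j" "g \<in> H" "is_bridge H s (al i) g"
  shows "al j g = al i g \<and> is_bridge H s (al j) g"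
  using assms(1)
proof (induction j rule: dec_induct)
  case base then show ?case using assms by simp
next
  case (step j)
  have b: "is_bridge H s (al j) g" and e: "al j g = al i g" using step.IH by auto
  show ?case
  proof (cases "al (Suc j) = al j")
    case True then show ?thesis using b e by simp
  next
    case False
    let ?g' = "s (cu j)"
    have c: "al j ?g' \<noteq> ?g'" "\<not> is_bridge H s (al j) ?g'" "al (Suc j) = cut_edge (al j) ?g'"
      using step_cases[of j] False by auto
    have g'H: "?g' \<in> H" using cu_H sH by auto
    have n1: "g \<noteq> ?g'" using b c by auto
    have n2: "g \<noteq> al j ?g'"
    proof
      assume "g = al j ?g'"
      then have "?g' = al j g" using al_al g'H by metis
      then have "is_bridge H s (al j) ?g'" using is_bridge_sym[of "al j" g H s] b al_al assms(2) by metis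
      then show False using c by simp
    qed
    have eq: "al (Suc j) g = al j g" using n1 n2 c(3) by (simp add: cut_edge_def)
    have "is_bridge H s (al (Suc j)) g"
      using bridge_persist[OF b eq subal_Suc assms(2) sH' al_invol al_invol] .
    then show ?thesis using eq e by simp
  qed
qed

definition nf :: "nat \<Rightarrow> nat" where "nf i = card {u\<in>H. al i u \<noteq> u}"

lemma nf_Suc: "nf (Suc i) \<le> nf i \<and> (al (Suc i) \<noteq> al i \<longrightarrow> nf (Suc i) < nf i)"
proof -
  have sub: "{u\<in>H. al (Suc i) u \<noteq> u} \<subseteq> {u\<in>H. al i u \<noteq> u}"
  proof
    fix u assume "u \<in> {u\<in>H. al (Suc i) u \<noteq> u}"
    then have "u \<in> H" "al (Suc i) u \<noteq> u" by auto
    moreover have "al (Suc i) u = al i u \<or> al (Suc i) u = u"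
      using subal_Suc[of i] \<open>u \<in> H\<close> unfolding subal_def by blast
    ultimately show "u \<in> {u\<in>H. al i u \<noteq> u}" by auto
  qed
  have fin2: "finite {u\<in>H. al i u \<noteq> u}" using fin by simp
  have le: "nf (Suc i) \<le> nf i" unfolding nf_def using card_mono[OF fin2 sub] .
  have "nf (Suc i) < nf i" if ne: "al (Suc i) \<noteq> al i"
  proof -
    let ?g = "s (cu i)"
    have c: "al i ?g \<noteq> ?g" "al (Suc i) = cut_edge (al i) ?g" using step_cases[of i] ne by blast+
    have gH: "?g \<in> H" using cu_H sH by blast
    have "al (Suc i) ?g = ?g" unfolding c(2) by (simp add: cut_edge_def)
    then have "?g \<notin> {u\<in>H. al (Suc i) u \<noteq> u}" by simp
    moreover have "?g \<in> {u\<in>H. al i u \<noteq> u}" using c(1) gH by simp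
    ultimately have "{u\<in>H. al (Suc i) u \<noteq> u} \<noteq> {u\<in>H. al i u \<noteq> u}" by metis
    then have "{u\<in>H. al (Suc i) u \<noteq> u} \<subset> {u\<in>H. al i u \<noteq> u}" using sub by (rule psubsetI[rotated])
    then show ?thesis unfolding nf_def using psubset_card_mono[OF fin2] by blast
  qed
  then show ?thesis using le by blast
qed

lemma nf_mono: "i \<le> j \<Longrightarrow> nf j \<le> nf i"
proof (induction j rule: dec_induct)
  case base then show ?case by simp
next
  case (step j) then show ?case using nf_Suc[of j] by linarith
qed

definition t0 :: nat where "t0 = (SOME t. \<forall>j. nf t \<le> nf j)"

lemma t0_min: "nf t0 \<le> nf j"
proof -
  obtain t where t: "nf t = (LEAST v. \<exists>t. nf t = v)" using LeastI[of "\<lambda>v. \<exists>t. nf t = v" "nf 0"] by blast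
  have "\<forall>j. nf t \<le> nf j"
  proof
    fix j show "nf t \<le> nf j" unfolding t by (rule Least_le) blast
  qed
  then have "\<forall>j. nf t0 \<le> nf j" unfolding t0_def by (rule someI)
  then show ?thesis by blast
qed

lemma al_const: "t0 \<le> j \<Longrightarrow> al j = al t0"
proof (induction j rule: dec_induct)
  case base then show ?case by simp
next
  case (step j)
  have "nf (Suc j) \<le> nf j" "nf j \<le> nf t0" using nf_Suc nf_mono step.hyps by auto
  moreover have "nf t0 \<le> nf (Suc j)" by (rule t0_min)
  ultimately have "\<not> nf (Suc j) < nf j" by simp
  then have "al (Suc j) = al j" using nf_Suc by blast
  then show ?case using step.IH by simp
qed

definition A :: "nat \<Rightarrow> nat" where "A = al t0"

lemma al_A: "t0 \<le> j \<Longrightarrow> al j = A" unfolding A_def by (rule al_const)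

lemma cu_Suc_A: "cu (Suc i) = A (s (cu i))"
proof -
  let ?g = "s (cu i)"
  have gH: "?g \<in> H" using cu_H sH by auto
  let ?j = "max (Suc i) t0"
  have Aj: "al ?j = A" using al_A by simp
  show ?thesis
  proof (cases "is_bridge H s (al i) ?g")
    case True
    then have "cu (Suc i) = al i ?g" by (simp add: st_Suc stp_def Let_def)
    moreover have "al ?j ?g = al i ?g" using bridge_persist_st[OF _ gH True, of ?j] by simp
    ultimately show ?thesis using Aj by simp
  next
    case nb: False
    show ?thesis
    proof (cases "al i ?g = ?g")
      case True
      then have "cu (Suc i) = ?g" using nb by (simp add: st_Suc stp_def Let_def)
      moreover have "al ?j ?g = ?g" using fixed_persist[of i ?j ?g] True gH by simp
      ultimately show ?thesis using Aj by simp
    next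
      case False
      then have "cu (Suc i) = ?g" "al (Suc i) = cut_edge (al i) ?g" using nb by (simp_all add: st_Suc stp_def Let_def)
      moreover have "al ?j ?g = ?g" using fixed_persist[of "Suc i" ?j ?g] calculation gH
        by (simp add: cut_edge_def)
      ultimately show ?thesis using Aj by simp
    qed
  qed
qed

lemma A_bridge:
  assumes "A (s (cu i)) \<noteq> s (cu i)"
  shows "is_bridge H s A (s (cu i))"
proof -
  let ?g = "s (cu i)"
  have gH: "?g \<in> H" using cu_H sH by auto
  let ?j = "max (Suc i) t0"
  have Aj: "al ?j = A" using al_A by simp
  have "is_bridge H s (al i) ?g"
  proof (rule ccontr)
    assume nb: "\<not> is_bridge H s (al i) ?g"
    have "al (Suc i) ?g = ?g"
      using nb by (cases "al i ?g = ?g") (simp_all add: st_Suc stp_def Let_def cut_edge_def)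
    then have "al ?j ?g = ?g" using fixed_persist[of "Suc i" ?j ?g] gH by simp
    then show False using assms Aj by simp
  qed
  then show ?thesis using bridge_persist_st[of i ?j ?g] gH Aj by simp
qed

lemma A_invol: "invol H A" using al_invol A_def by simp
lemma A_con: "connected_hes H s A" using al_con A_def by simp
lemma A_r: "A r = r" using al_r A_def by simp

definition phi where "phi = A \<circ> s"

lemma cu_phi: "cu i = (phi ^^ i) r"
proof (induction i)
  case 0 then show ?case by (simp add: st_def)
next
  case (Suc i) then show ?case by (simp add: cu_Suc_A phi_def)
qed

end


lemma invol_bij: "invol H a \<Longrightarrow> bij_betw a H H"
  by (rule bij_betw_byWitness[where f'=a]) (auto simp: invol_def)

lemma crossing: "P (0::nat) \<Longrightarrow> \<not> P n \<Longrightarrow> \<exists>k<n. P k \<and> \<not> P (Suc k)"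
proof (induction n)
  case 0 then show ?case by simp
next
  case (Suc n) then show ?case by (cases "P n") (auto intro: less_SucI)
qed

lemma clos_compl:
  assumes fin: "finite H" and sb: "bij_betw s H H" and b: "invol H b" and c: "clos H s b S"
  shows "clos H s b (H - S)"
proof -
  have SH: "S \<subseteq> H" using c by (simp add: clos_def)
  have inj: "inj_on s S" using sb SH by (meson bij_betw_imp_inj_on inj_on_subset)
  have im: "s ` S \<subseteq> S" using c by (auto simp: clos_def)
  have finS: "finite S" using fin SH finite_subset by blast
  have eq: "s ` S = S" using card_subset_eq[OF finS im] card_image[OF inj] by simp
  show ?thesis unfolding clos_def
  proof (intro conjI ballI)
    show "H - S \<subseteq> H" by blast
  next
    fix u assume u: "u \<in> H - S"
    have "s u \<notin> S"
    proof
      assume "s u \<in> S"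
      then obtain v where v: "v \<in> S" "s v = s u" using eq by (metis imageE)
      then have "v = u" using sb SH u by (metis DiffD1 bij_betw_imp_inj_on inj_on_def subsetD)
      then show False using v u by simp
    qed
    moreover have "s u \<in> H" using u sb by (auto dest: bij_betwE)
    ultimately show "s u \<in> H - S" by simp
  next
    fix u assume u: "u \<in> H - S"
    have "b u \<notin> S"
    proof
      assume "b u \<in> S"
      then have "b (b u) \<in> S" using c by (simp add: clos_def)
      then show False using u b by (simp add: invol_def)
    qed
    moreover have "b u \<in> H" using u b by (simp add: invol_def)
    ultimately show "b u \<in> H - S" by simp
  qed
qed

context rm begin

lemma A_bij: "bij_betw A H H" using invol_bij A_invol by blast
lemma phi_bij: "bij_betw phi H H" unfolding phi_def using bij_betw_trans[OF sb A_bij] .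
lemma phiH: "u \<in> H \<Longrightarrow> phi u \<in> H" using phi_bij by (auto dest: bij_betwE)
lemma phinH: "u \<in> H \<Longrightarrow> (phi ^^ n) u \<in> H"
  by (induction n) (auto simp: phiH)
lemma phin_inj: "inj_on (phi ^^ n) H"
  using bij_betw_funpow[OF phi_bij] bij_betw_imp_inj_on by blast

lemma exists_period: "\<exists>p>0. (phi ^^ p) r = r"
proof -
  let ?f = "\<lambda>i. (phi ^^ i) r"
  have "?f ` {..card H} \<subseteq> H" using phinH rH by auto
  then have "card (?f ` {..card H}) \<le> card H" using fin by (simp add: card_mono)
  then have "card (?f ` {..card H}) < card {..card H}" by simp
  then have "\<not> inj_on ?f {..card H}" using pigeonhole by blast
  then obtain i j where ij: "i < j" "?f i = ?f j"
    unfolding inj_on_def by (metis linorder_neqE_nat)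
  have "(phi ^^ i) ((phi ^^ (j - i)) r) = (phi ^^ j) r"
    using ij(1) funpow_add[of i "j - i" phi] by (simp add: o_def)
  then have "(phi ^^ i) ((phi ^^ (j - i)) r) = (phi ^^ i) r" using ij by simp
  then have "(phi ^^ (j - i)) r = r" using phin_inj[of i] phinH rH unfolding inj_on_def by blast
  then show ?thesis using ij(1) by (intro exI[of _ "j - i"]) simp
qed

definition T :: nat where "T = (LEAST p. 0 < p \<and> (phi ^^ p) r = r)"

lemma T_prop: "0 < T" "(phi ^^ T) r = r"
  using LeastI_ex[OF exists_period] unfolding T_def by auto

lemma T_min: "0 < q \<Longrightarrow> q < T \<Longrightarrow> (phi ^^ q) r \<noteq> r"
  using not_less_Least unfolding T_def by blast

lemma funpow_comm: "(phi ^^ a) ((phi ^^ b) u) = (phi ^^ b) ((phi ^^ a) u)"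
  by (metis add.commute comp_apply funpow_add)

lemma funpow_plus: "(phi ^^ (a + b)) u = (phi ^^ a) ((phi ^^ b) u)"
  by (simp add: funpow_add)

lemma distinct_orb: "i < j \<Longrightarrow> j < T \<Longrightarrow> (phi ^^ i) r \<noteq> (phi ^^ j) r"
proof
  assume ij: "i < j" "j < T" and e: "(phi ^^ i) r = (phi ^^ j) r"
  have "(phi ^^ j) r = (phi ^^ i) ((phi ^^ (j - i)) r)"
    using funpow_plus[of i "j - i" r] ij by simp
  then have "(phi ^^ (j - i)) r = r" using e phin_inj[of i] phinH rH unfolding inj_on_def by metis
  then show False using T_min[of "j - i"] ij by simp
qed

lemma period_mult: "(phi ^^ (q * T)) r = r"
proof (induction q)
  case 0 then show ?case by simp
next
  case (Suc q)
  have "(phi ^^ (Suc q * T)) r = (phi ^^ T) ((phi ^^ (q * T)) r)"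
    using funpow_plus[of T "q * T" r] by simp
  then show ?case using Suc T_prop by simp
qed

lemma orb_mod: "(phi ^^ i) r = (phi ^^ (i mod T)) r"
proof -
  have "(phi ^^ i) r = (phi ^^ (i mod T)) ((phi ^^ (i div T * T)) r)"
    using funpow_plus[of "i mod T" "i div T * T" r] by simp
  then show ?thesis using period_mult by simp
qed

definition Orb :: "nat set" where "Orb = (\<lambda>i. (phi ^^ i) r) ` {..<T}"

lemma orb_mem: "(phi ^^ i) r \<in> Orb"
  unfolding Orb_def using orb_mod[of i] T_prop(1) by auto

lemma Orb_H: "Orb \<subseteq> H" unfolding Orb_def using phinH rH by auto

lemma card_Orb: "card Orb = T"
  unfolding Orb_def
proof (rule trans[OF card_image])
  show "inj_on (\<lambda>i. (phi ^^ i) r) {..<T}"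
    unfolding inj_on_def using distinct_orb by (metis lessThan_iff linorder_neqE_nat)
qed simp

lemma Orb_s: assumes hO: "h \<in> Orb" shows "s h \<in> Orb"
proof (rule ccontr)
  assume gO: "s h \<notin> Orb"
  let ?g = "s h"
  obtain i where hi: "h = (phi ^^ i) r" using hO unfolding Orb_def by auto
  have hH: "h \<in> H" using hO Orb_H by auto
  have gH: "?g \<in> H" using hH sH by auto
  have phih: "phi h = A ?g" by (simp add: phi_def)
  have "A ?g \<noteq> ?g"
  proof
    assume "A ?g = ?g"
    then have "?g = (phi ^^ (Suc i)) r" using phih hi by simp
    then show False using gO orb_mem by metis
  qed
  moreover have "cu i = h" using hi cu_phi by simp
  ultimately have br: "is_bridge H s A ?g" using A_bridge[of i] by simp
  let ?b = "cut_edge A ?g"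
  have bi: "invol H ?b" using cut_edge_invol[OF A_invol gH] .
  have bH: "\<forall>u\<in>H. ?b u \<in> H" using bi by (simp add: invol_def)
  have "\<not> connected_hes H s ?b" using br by (simp add: is_bridge_def)
  then obtain S where S: "clos H s ?b S" "S \<noteq> {}" "S \<noteq> H"
    using conn_iff[OF sH' bH] by blast
  have C: "clos H s ?b (H - S)" using clos_compl[OF fin sb bi S(1)] .
  have AgH: "A ?g \<in> H" using A_invol gH by (simp add: invol_def)
  have AAg: "A (A ?g) = ?g" using A_invol gH by (simp add: invol_def)
  obtain S2 where S2: "clos H s ?b S2" "S2 \<noteq> {}" "S2 \<noteq> H" "A ?g \<in> S2"
  proof (cases "A ?g \<in> S")
    case True then show ?thesis using that S by blast
  next
    case False
    then have "A ?g \<in> H - S" using AgH by simp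
    moreover have "H - S \<noteq> H" using S(1,2) by (auto simp: clos_def)
    moreover have "H - S \<noteq> {}" using S(1,3) by (auto simp: clos_def)
    ultimately show ?thesis using that C by blast
  qed
  have S2H: "S2 \<subseteq> H" using S2 by (simp add: clos_def)
  have gS2: "?g \<notin> S2"
  proof
    assume gS: "?g \<in> S2"
    have "clos H s A S2" unfolding clos_def
    proof (intro conjI ballI S2H)
      fix u assume u: "u \<in> S2"
      show "s u \<in> S2" using S2(1) u by (simp add: clos_def)
      show "A u \<in> S2"
      proof (cases "u = ?g \<or> u = A ?g")
        case True then show ?thesis using gS S2(4) AAg by auto
      next
        case False
        then have "A u = ?b u" by (simp add: cut_edge_def)
        then show ?thesis using S2(1) u by (simp add: clos_def)
      qed
    qed
    then have "S2 = H" using conn_closD[OF A_con sH' _ _ S2(2)] A_invol by (simp add: invol_def)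
    then show False using S2(3) by simp
  qed
  have hS2: "h \<notin> S2" using gS2 S2(1) by (auto simp: clos_def)
  let ?f = "\<lambda>k. (phi ^^ k) (phi h)"
  have f0: "?f 0 \<in> S2" using phih S2(4) by simp
  have fT: "?f (T - 1) = h"
  proof -
    have "?f (T - 1) = (phi ^^ T) h"
      using T_prop(1) by (metis Suc_diff_1 comp_apply funpow_Suc_right)
    also have "\<dots> = (phi ^^ i) ((phi ^^ T) r)" using hi funpow_comm by simp
    finally show ?thesis using T_prop hi by simp
  qed
  obtain k where k: "?f k \<in> S2" "?f (Suc k) \<notin> S2"
    using crossing[of "\<lambda>k. ?f k \<in> S2" "T - 1"] f0 fT hS2 by auto
  let ?u = "?f k"
  have uO: "phi ?u \<in> Orb"
  proof -
    have "phi ?u = (phi ^^ (Suc k + Suc i)) r"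
      using hi by (simp add: funpow_plus funpow_swap1)
    then show ?thesis using orb_mem[of "Suc (Suc (k + i))"] by simp
  qed
  have su: "s ?u \<in> S2" using k(1) S2(1) by (simp add: clos_def)
  have "s ?u = A ?g"
  proof (rule ccontr)
    assume ne: "s ?u \<noteq> A ?g"
    have "s ?u \<noteq> ?g" using su gS2 by auto
    then have "phi ?u = ?b (s ?u)" using ne by (simp add: phi_def cut_edge_def)
    then have "phi ?u \<in> S2" using su S2(1) by (simp add: clos_def)
    then show False using k(2) by simp
  qed
  then have "phi ?u = ?g" using AAg by (simp add: phi_def)
  then show False using uO gO by simp
qed

lemma Orb_A: assumes uO: "u \<in> Orb" shows "A u \<in> Orb"
proof -
  obtain i where ui: "u = (phi ^^ i) r" "i < T" using uO unfolding Orb_def by auto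
  define v where "v = (phi ^^ (i + T - 1)) r"
  have vO: "v \<in> Orb" unfolding v_def by (rule orb_mem)
  have "phi v = (phi ^^ (i + T)) r"
    using T_prop(1) unfolding v_def by (metis Suc_diff_1 add_gr_0 comp_apply funpow_Suc_right funpow_swap1)
  also have "\<dots> = u" using ui funpow_plus[of i T r] T_prop by simp
  finally have "A u = A (A (s v))" by (simp add: phi_def)
  also have "\<dots> = s v" using A_invol vO Orb_H sH by (auto simp: invol_def)
  finally show ?thesis using Orb_s vO by simp
qed

lemma Orb_eq: "Orb = H"
proof -
  have "clos H s A Orb" using Orb_H Orb_s Orb_A by (simp add: clos_def)
  moreover have "Orb \<noteq> {}" using orb_mem by blast
  ultimately show ?thesis using conn_closD[OF A_con sH' _ _] A_invol by (simp add: invol_def)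
qed

lemma T_card: "T = card H" using card_Orb Orb_eq by simp

lemma cu_distinct: "i < j \<Longrightarrow> j < card H \<Longrightarrow> cu i \<noteq> cu j"
  using distinct_orb T_card cu_phi by simp

lemma cu_T: "cu (card H) = r" using T_prop T_card cu_phi by simp

lemma cu_0: "cu 0 = r" by (simp add: st_def)

lemma cu_ne_r: "0 < j \<Longrightarrow> j < card H \<Longrightarrow> cu j \<noteq> r"
  using cu_distinct[of 0 j] cu_0 by simp

lemma cardH_pos: "0 < card H" using T_prop T_card by simp

end


lemma conn_ext:
  assumes sH: "\<forall>u\<in>H. s u \<in> H" and aH: "\<forall>u\<in>H. a u \<in> H"
    and xH: "x \<notin> H" and yH: "y \<notin> H" and xy: "x \<noteq> y" and rH: "r \<in> H" and cH: "c \<in> H"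
    and sR: "sR = (if c = r then s(r := x, x := y, y := s r) else s(r := x, x := s r, c := y, y := s c))"
    and b: "\<forall>u\<in>H. b u = a u" "b x = x" "b y = y"
  shows "connected_hes (H \<union> {x, y}) sR b \<longleftrightarrow> connected_hes H s a"
proof -
  have sRH: "\<forall>u\<in>H \<union> {x, y}. sR u \<in> H \<union> {x, y}" using sH rH cH unfolding sR by auto
  have bH: "\<forall>u\<in>H \<union> {x, y}. b u \<in> H \<union> {x, y}" using aH b by auto
  have sRu: "sR u = s u" if "u \<in> H" "u \<noteq> r" "u \<noteq> c" for u
    using that xH yH unfolding sR by auto
  have sRr: "sR r = x" using rH xH yH unfolding sR by auto
  have sRc: "c \<noteq> r \<Longrightarrow> sR c = y" using xy cH xH yH unfolding sR by auto
  have sRx: "sR x = (if c = r then y else s r)" using xy xH yH rH cH unfolding sR by auto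
  have sRy: "sR y = s c" using xy xH yH rH cH unfolding sR by auto
  show ?thesis
  proof
    assume W: "connected_hes (H \<union> {x, y}) sR b"
    show "connected_hes H s a"
    proof (rule conn_closI[OF sH aH])
      fix S assume S: "clos H s a S" "S \<noteq> {}"
      have SH: "S \<subseteq> H" using S by (simp add: clos_def)
      define S' where "S' = S \<union> (if r \<in> S then {x} else {}) \<union> (if c \<in> S then {y} else {})"
      have "clos (H \<union> {x, y}) sR b S'"
        unfolding clos_def
      proof (intro conjI ballI)
        show "S' \<subseteq> H \<union> {x, y}" using SH unfolding S'_def by auto
      next
        fix u assume u: "u \<in> S'"
        show "sR u \<in> S'"
        proof -
          consider "u \<in> S" "u \<noteq> r" "u \<noteq> c" | "u = r" "r \<in> S" | "u = c" "c \<in> S" "c \<noteq> r"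
            | "u = x" "r \<in> S" | "u = y" "c \<in> S"
            using u unfolding S'_def by (auto split: if_splits)
          then show ?thesis
          proof cases
            case 1 then show ?thesis using sRu[of u] SH S(1) unfolding S'_def clos_def by auto
          next
            case 2 then show ?thesis using sRr unfolding S'_def by auto
          next
            case 3 then show ?thesis using sRc unfolding S'_def by auto
          next
            case 4 then show ?thesis using sRx S(1) unfolding S'_def clos_def by auto
          next
            case 5 then show ?thesis using sRy S(1) unfolding S'_def clos_def by auto
          qed
        qed
        show "b u \<in> S'"
          using u b S(1) SH xH yH unfolding S'_def clos_def by (auto split: if_splits)
      qed
      moreover have "S' \<noteq> {}" using S(2) unfolding S'_def by auto
      ultimately have "S' = H \<union> {x, y}" using conn_closD[OF W sRH bH] by blast
      then show "S = H" using xH yH SH unfolding S'_def by (auto split: if_splits)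
    qed
  next
    assume N: "connected_hes H s a"
    show "connected_hes (H \<union> {x, y}) sR b"
    proof (rule conn_closI[OF sRH bH])
      fix S assume S: "clos (H \<union> {x, y}) sR b S" "S \<noteq> {}"
      have cl: "u \<in> S \<Longrightarrow> sR u \<in> S" "u \<in> S \<Longrightarrow> b u \<in> S" for u using S(1) by (auto simp: clos_def)
      have SH: "S \<subseteq> H \<union> {x, y}" using S(1) by (simp add: clos_def)
      have "clos H s a (S \<inter> H)"
        unfolding clos_def
      proof (intro conjI ballI)
        fix u assume u: "u \<in> S \<inter> H"
        show "a u \<in> S \<inter> H" using cl(2)[of u] u b aH by auto
        show "s u \<in> S \<inter> H"
        proof (cases "u = r")
          case True
          then have "x \<in> S" using cl(1)[of u] u sRr by auto
          then have "s r \<in> S"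
          proof (cases "c = r")
            case True
            then have "y \<in> S" using cl(1)[of x] \<open>x \<in> S\<close> sRx by auto
            then show ?thesis using cl(1)[of y] sRy True by auto
          next
            case False then show ?thesis using cl(1)[of x] \<open>x \<in> S\<close> sRx by auto
          qed
          then show ?thesis using True sH rH by auto
        next
          case nr: False
          show ?thesis
          proof (cases "u = c")
            case True
            then have "y \<in> S" using cl(1)[of u] u sRc nr by auto
            then show ?thesis using cl(1)[of y] sRy True sH cH by auto
          next
            case False then show ?thesis using cl(1)[of u] u sRu nr sH by auto
          qed
        qed
      qed auto
      moreover have "S \<inter> H \<noteq> {}"
      proof
        assume e: "S \<inter> H = {}"
        obtain u where "u \<in> S" using S(2) by auto
        then have "u = x \<or> u = y" using e SH by auto
        then have "y \<in> S \<or> s r \<in> S \<or> s c \<in> S"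
          using cl(1)[of u] \<open>u \<in> S\<close> sRx sRy by (auto split: if_splits)
        then have "s c \<in> S \<or> s r \<in> S" using cl(1)[of y] sRy by auto
        then show False using e sH rH cH by auto
      qed
      ultimately have SHH: "S \<inter> H = H" using conn_closD[OF N sH aH] by blast
      then have "r \<in> S" "c \<in> S" using rH cH by auto
      then have "x \<in> S" using cl(1)[of r] sRr by auto
      moreover have "y \<in> S"
        using cl(1)[of c] \<open>c \<in> S\<close> cl(1)[of x] \<open>x \<in> S\<close> sRc sRx by (cases "c = r") auto
      ultimately show "S = H \<union> {x, y}" using SHH SH by auto
    qed
  qed
qed


lemma fresh_gt: "finite H \<Longrightarrow> u \<in> H \<Longrightarrow> u < fresh H"
  unfolding fresh_def by (simp add: le_imp_less_Suc)

lemma fresh_notin: "finite H \<Longrightarrow> fresh H \<notin> H"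
  using fresh_gt by blast

locale rmR = rm +
  fixes k :: nat
  assumes k1: "1 \<le> k" and kn: "k \<le> card H"
begin

definition "c = cu (k - 1)"
definition "x = fresh H"
definition "y = Suc x"
definition "sR = (if c = r then s(r := x, x := y, y := s r) else s(r := x, x := s r, c := y, y := s c))"
definition "HR = H \<union> {x, y}"
definition "aR0 = a0(x := y, y := x)"
definition "stR i = (stp HR sR ^^ i) (aR0, r)"

lemma xH: "x \<notin> H" unfolding x_def using fresh_notin fin by blast
lemma yH: "y \<notin> H"
proof
  assume "y \<in> H"
  then have "y < x" unfolding x_def using fresh_gt fin by blast
  then show False unfolding y_def by simp
qed
lemma xy: "x \<noteq> y" unfolding y_def by simp
lemma cH: "c \<in> H" unfolding c_def by (rule cu_H)

lemma stR_Suc: "stR (Suc i) = stp HR sR (stR i)" by (simp add: stR_def)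
lemma stR_0: "stR 0 = (aR0, r)" by (simp add: stR_def)

lemma conn_R:
  assumes "\<forall>u\<in>H. a u \<in> H"
  shows "connected_hes HR sR (a(x := x, y := y)) \<longleftrightarrow> connected_hes H s a"
  unfolding HR_def
  by (rule conn_ext[OF sH' assms xH yH xy rH cH sR_def]) (use xH yH in auto)

lemma R_step:
  assumes ai: "invol H a" and hH: "h \<in> H" and su: "sR u = s h"
  shows "stp HR sR (a(x := x, y := y), u) = ((fst (stp H s (a, h)))(x := x, y := y), snd (stp H s (a, h)))"
proof -
  let ?g = "s h"
  have gH: "?g \<in> H" using hH sH by auto
  have agH: "a ?g \<in> H" using ai gH by (simp add: invol_def)
  have gx: "?g \<noteq> x" "?g \<noteq> y" "a ?g \<noteq> x" "a ?g \<noteq> y" using gH agH xH yH by auto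
  have e1: "(a(x := x, y := y)) ?g = a ?g" using gx by simp
  have e2: "cut_edge (a(x := x, y := y)) ?g = (cut_edge a ?g)(x := x, y := y)"
    using gx by (auto simp: cut_edge_def fun_eq_iff)
  have cH': "\<forall>u\<in>H. cut_edge a ?g u \<in> H" using cut_edge_in[OF ai] by blast
  have e3: "is_bridge HR sR (a(x := x, y := y)) ?g = is_bridge H s a ?g"
    unfolding is_bridge_def e1 e2 using conn_R[OF cH'] by simp
  show ?thesis using su e1 e2 e3 by (simp add: stp_def Let_def)
qed

lemma sRr: "sR r = x" using rH xH yH unfolding sR_def by auto
lemma sRc: "c \<noteq> r \<Longrightarrow> sR c = y" using xy cH xH yH unfolding sR_def by auto
lemma sRx: "sR x = (if c = r then y else s r)" using xy xH yH rH cH unfolding sR_def by auto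
lemma sRy: "sR y = s c" using xy xH yH rH cH unfolding sR_def by auto
lemma sRu: "u \<in> H \<Longrightarrow> u \<noteq> r \<Longrightarrow> u \<noteq> c \<Longrightarrow> sR u = s u"
  using xH yH unfolding sR_def by auto

lemma R1: "stR 1 = (a0(x := x, y := y), x)"
proof -
  have ax: "aR0 x = y" unfolding aR0_def using xy by simp
  have cut: "cut_edge aR0 x = a0(x := x, y := y)"
    unfolding cut_edge_def aR0_def using xy by (auto simp: fun_eq_iff)
  have a0H: "\<forall>u\<in>H. a0 u \<in> H" using a0i by (simp add: invol_def)
  have "connected_hes HR sR (cut_edge aR0 x)" unfolding cut using conn_R[OF a0H] con by simp
  then have "\<not> is_bridge HR sR aR0 x" by (simp add: is_bridge_def)
  then show ?thesis using ax xy cut sRr by (simp add: stR_def stp_def Let_def)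
qed

definition pos :: "nat \<Rightarrow> nat" where "pos j = (if j = 0 then x else cu j)"

lemma cne: "2 \<le> k \<Longrightarrow> c \<noteq> r"
  unfolding c_def using cu_ne_r[of "k - 1"] kn by simp

lemma R2: "j \<le> k - 1 \<Longrightarrow> stR (Suc j) = ((al j)(x := x, y := y), pos j)"
proof (induction j)
  case 0 then show ?case using R1 by (simp add: pos_def st_def fun_upd_def)
next
  case (Suc j)
  have IH: "stR (Suc j) = ((al j)(x := x, y := y), pos j)" using Suc by (simp add: fun_upd_def)
  have "sR (pos j) = s (cu j)"
  proof (cases "j = 0")
    case True
    have "c \<noteq> r" using cne Suc.prems by simp
    then show ?thesis using True sRx by (simp add: pos_def cu_0)
  next
    case False
    have "cu j \<noteq> r" using cu_ne_r[of j] False Suc.prems kn by simp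
    moreover have "cu j \<noteq> c" unfolding c_def using cu_distinct[of j "k - 1"] Suc.prems kn by simp
    ultimately show ?thesis using False sRu cu_H by (simp add: pos_def)
  qed
  then have "stR (Suc (Suc j)) = ((fst (stp H s (st j)))(x := x, y := y), snd (stp H s (st j)))"
    using IH R_step[OF al_invol cu_H, of "pos j" j] by (simp add: stR_Suc)
  then show ?case using Suc.prems by (simp only: st_Suc[symmetric] pos_def) (simp add: fun_upd_def)
qed

lemma R3: "stR (k + 1) = ((al (k - 1))(x := x, y := y), y)"
proof -
  have e: "stR k = ((al (k - 1))(x := x, y := y), pos (k - 1))" using R2[of "k - 1"] k1 by simp
  have sy: "sR (pos (k - 1)) = y"
  proof (cases "k = 1")
    case True
    then have "c = r" unfolding c_def using cu_0 by simp
    then show ?thesis using True sRx by (simp add: pos_def)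
  next
    case False
    then show ?thesis using sRc cne k1 by (simp add: pos_def c_def)
  qed
  have ny: "\<not> is_bridge HR sR ((al (k - 1))(x := x, y := y)) y" by (simp add: is_bridge_def)
  show ?thesis using e sy ny k1 by (simp add: stR_Suc[of k, simplified] stp_def Let_def)
qed

lemma R4: "k \<le> j \<Longrightarrow> j \<le> card H \<Longrightarrow> stR (j + 2) = ((al j)(x := x, y := y), cu j)"
proof (induction j rule: dec_induct)
  case base
  have "sR y = s (cu (k - 1))" using sRy c_def by simp
  then have "stR (k + 2) = ((fst (stp H s (st (k - 1))))(x := x, y := y), snd (stp H s (st (k - 1))))"
    using R3 R_step[OF al_invol cu_H, of y "k - 1"] by (simp add: stR_Suc[of "k + 1", simplified])
  moreover have "st k = stp H s (st (k - 1))" using k1 st_Suc[of "k - 1"] by simp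
  ultimately show ?case by (simp only:)
next
  case (step j)
  have IH: "stR (j + 2) = ((al j)(x := x, y := y), cu j)" using step by (simp add: fun_upd_def)
  have "cu j \<noteq> r" using cu_ne_r[of j] step k1 by simp
  moreover have "cu (k - 1) \<noteq> cu j" using cu_distinct[of "k - 1" j] step k1 by simp
  then have "cu j \<noteq> c" unfolding c_def by metis
  ultimately have "sR (cu j) = s (cu j)" using sRu cu_H by simp
  then have "stR (Suc j + 2) = ((fst (stp H s (st j)))(x := x, y := y), snd (stp H s (st j)))"
    using IH R_step[OF al_invol cu_H, of "cu j" j] by (simp add: stR_Suc[of "j + 2", simplified])
  then show ?case by (simp only: st_Suc[symmetric])
qed

end


context rm begin
lemma s_cu_ne: "Suc j < card H \<Longrightarrow> s (cu j) \<noteq> r"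
proof
  assume j: "Suc j < card H" and e: "s (cu j) = r"
  have "cu (Suc j) = r" using cu_Suc_A e A_r by simp
  then show False using cu_ne_r[of "Suc j"] j by simp
qed

lemma s_cu_last: "s (cu (card H - 1)) = r"
proof -
  have "cu (Suc (card H - 1)) = r" using cu_T cardH_pos by simp
  then have "A (s (cu (card H - 1))) = r" using cu_Suc_A by simp
  then have "A (A (s (cu (card H - 1)))) = A r" by simp
  then show ?thesis using A_invol cu_H sH A_r by (simp add: invol_def)
qed
end

locale rmI = N: rm H s a0 r + M: rm HM sM aM0 rM
  for H s a0 r HM sM aM0 rM +
  fixes l :: nat
  assumes l1: "1 \<le> l" and ln: "l \<le> card H"
begin

definition "cI = N.cu (l - 1)"
definition "off = fresh H"
definition "HB = (\<lambda>u. off + u) ` HM"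
definition "z = off + fresh HM"
definition "HI = H \<union> HB \<union> {z}"
definition "sI = (\<lambda>u. if u \<in> HB then off + sM (u - off)
                  else if u = cI then z else if u = z then s cI else s u)"
definition "glue aA aB = (\<lambda>u. if u = off + rM then z
                  else if u \<in> HB then off + aB (u - off)
                  else if u = z then off + rM else aA u)"
definition "aI0 = glue a0 aM0"
definition "stI i = (stp HI sI ^^ i) (aI0, r)"

lemma cIH: "cI \<in> H" unfolding cI_def by (rule N.cu_H)
lemma HB_H: "u \<in> HB \<Longrightarrow> u \<notin> H"
  unfolding HB_def off_def using fresh_gt[OF N.fin] by fastforce
lemma zH: "z \<notin> H" unfolding z_def off_def using fresh_gt[OF N.fin] by fastforce
lemma zHB: "z \<notin> HB" unfolding z_def HB_def using fresh_notin[OF M.fin] by auto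
lemma HB_iff: "off + v \<in> HB \<longleftrightarrow> v \<in> HM" unfolding HB_def by auto
lemma HB_E: "u \<in> HB \<Longrightarrow> u = off + (u - off) \<and> u - off \<in> HM" unfolding HB_def by auto
lemma rMB: "off + rM \<in> HB" using HB_iff M.rH by simp

lemma sI_H: "u \<in> H \<Longrightarrow> u \<noteq> cI \<Longrightarrow> sI u = s u"
  unfolding sI_def using HB_H zH by auto
lemma sI_c: "sI cI = z" unfolding sI_def using HB_H cIH by auto
lemma sI_z: "sI z = s cI" unfolding sI_def using zHB cIH zH by auto
lemma sI_B: "v \<in> HM \<Longrightarrow> sI (off + v) = off + sM v" unfolding sI_def using HB_iff by auto

lemma gl_H: "u \<in> H \<Longrightarrow> glue aA aB u = aA u"
  unfolding glue_def using HB_H zH rMB by (metis)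
lemma gl_r: "glue aA aB (off + rM) = z" unfolding glue_def by simp
lemma gl_z: "glue aA aB z = off + rM" unfolding glue_def using zHB rMB by auto
lemma gl_B: "v \<in> HM \<Longrightarrow> v \<noteq> rM \<Longrightarrow> glue aA aB (off + v) = off + aB v"
  unfolding glue_def using HB_iff by auto

lemma sI_HI: "\<forall>u\<in>HI. sI u \<in> HI"
proof
  fix u assume u: "u \<in> HI"
  consider "u \<in> H" | "u \<in> HB" | "u = z" using u unfolding HI_def by auto
  then show "sI u \<in> HI"
  proof cases
    case 1 then show ?thesis using sI_H sI_c N.sH unfolding HI_def by (cases "u = cI") auto
  next
    case 2
    then obtain v where v: "u = off + v" "v \<in> HM" using HB_E by metis
    then have "sI u = off + sM v" using sI_B by simp
    then show ?thesis using M.sH v HB_iff unfolding HI_def by auto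
  next
    case 3 then show ?thesis using sI_z N.sH cIH unfolding HI_def by auto
  qed
qed

lemma gl_HI:
  assumes aA: "\<forall>u\<in>H. aA u \<in> H" and aB: "\<forall>u\<in>HM. aB u \<in> HM"
  shows "\<forall>u\<in>HI. glue aA aB u \<in> HI"
proof
  fix u assume u: "u \<in> HI"
  consider "u \<in> H" | "u = off + rM" | "u \<in> HB" "u \<noteq> off + rM" | "u = z" using u unfolding HI_def by auto
  then show "glue aA aB u \<in> HI"
  proof cases
    case 1 then show ?thesis using gl_H aA unfolding HI_def by auto
  next
    case 2 then show ?thesis using gl_r unfolding HI_def by auto
  next
    case 3
    then obtain v where v: "u = off + v" "v \<in> HM" "v \<noteq> rM" using HB_E by metis
    then show ?thesis using gl_B aB HB_iff unfolding HI_def by auto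
  next
    case 4 then show ?thesis using gl_z rMB unfolding HI_def by auto
  qed
qed

lemma conn_glue:
  assumes aA: "\<forall>u\<in>H. aA u \<in> H" and aB: "\<forall>u\<in>HM. aB u \<in> HM" and aBr: "aB rM = rM"
  shows "connected_hes HI sI (glue aA aB) \<longleftrightarrow> connected_hes H s aA \<and> connected_hes HM sM aB"
proof -
  note gHI = gl_HI[OF aA aB]
  show ?thesis
  proof (intro iffI conjI)
    assume W: "connected_hes HI sI (glue aA aB)"
    show "connected_hes H s aA"
    proof (rule conn_closI[OF N.sH' aA])
      fix S assume S: "clos H s aA S" "S \<noteq> {}"
      have SH: "S \<subseteq> H" using S by (simp add: clos_def)
      show "S = H"
      proof (cases "cI \<in> S")
        case True
        let ?S = "S \<union> HB \<union> {z}"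
        have "clos HI sI (glue aA aB) ?S" unfolding clos_def
        proof (intro conjI)
          show "?S \<subseteq> HI" using SH unfolding HI_def by auto
        next
          show "\<forall>u\<in>?S. sI u \<in> ?S \<and> glue aA aB u \<in> ?S"
          proof
          fix u assume u: "u \<in> ?S"
          consider "u \<in> S" | "u \<in> HB" | "u = z" using u by auto
          then show "sI u \<in> ?S \<and> glue aA aB u \<in> ?S"
          proof cases
            case 1
            then have "u \<in> H" using SH by auto
            then show ?thesis using 1 S(1) sI_H sI_c gl_H unfolding clos_def by (cases "u = cI") auto
          next
            case 2
            then obtain v where v: "u = off + v" "v \<in> HM" using HB_E by metis
            have "sI u \<in> HB" using sI_B v M.sH HB_iff by simp
            moreover have "glue aA aB u \<in> HB \<union> {z}"
              using v gl_r gl_B aB HB_iff by (cases "v = rM") auto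
            ultimately show ?thesis by auto
          next
            case 3 then show ?thesis using sI_z gl_z True S(1) rMB unfolding clos_def by auto
          qed
          qed
        qed
        then have "?S = HI" using conn_closD[OF W sI_HI gHI] by blast
        then show ?thesis using SH HB_H zH unfolding HI_def by blast
      next
        case False
        have "clos HI sI (glue aA aB) S" unfolding clos_def
        proof (intro conjI ballI)
          show "S \<subseteq> HI" using SH unfolding HI_def by auto
        next
          fix u assume u: "u \<in> S"
          then have "u \<in> H" "u \<noteq> cI" using SH False by auto
          then show "sI u \<in> S" "glue aA aB u \<in> S" using u S(1) sI_H gl_H unfolding clos_def by auto
        qed
        then have "S = HI" using conn_closD[OF W sI_HI gHI] S(2) by blast
        then show ?thesis using SH zH unfolding HI_def by auto
      qed
    qed
    show "connected_hes HM sM aB"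
    proof (rule conn_closI[OF M.sH' aB])
      fix S assume S: "clos HM sM aB S" "S \<noteq> {}"
      have SH: "S \<subseteq> HM" using S by (simp add: clos_def)
      let ?T = "(\<lambda>v. off + v) ` S"
      have Tsub: "?T \<subseteq> HB" using SH unfolding HB_def by auto
      show "S = HM"
      proof (cases "rM \<in> S")
        case True
        let ?S = "?T \<union> {z} \<union> H"
        have "clos HI sI (glue aA aB) ?S" unfolding clos_def
        proof (intro conjI)
          show "?S \<subseteq> HI" using Tsub unfolding HI_def by auto
        next
          show "\<forall>u\<in>?S. sI u \<in> ?S \<and> glue aA aB u \<in> ?S"
          proof
          fix u assume u: "u \<in> ?S"
          consider "u \<in> ?T" | "u = z" | "u \<in> H" using u by auto
          then show "sI u \<in> ?S \<and> glue aA aB u \<in> ?S"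
          proof cases
            case 1
            then obtain v where v: "u = off + v" "v \<in> S" by auto
            have vH: "v \<in> HM" using v SH by auto
            have "sI u = off + sM v" using sI_B vH v by simp
            moreover have "sM v \<in> S" using S(1) v by (simp add: clos_def)
            moreover have "glue aA aB u \<in> ?S"
            proof (cases "v = rM")
              case True then show ?thesis using v gl_r by simp
            next
              case False
              then have "glue aA aB u = off + aB v" using gl_B vH v by simp
              moreover have "aB v \<in> S" using S(1) v by (simp add: clos_def)
              ultimately show ?thesis by auto
            qed
            ultimately show ?thesis by auto
          next
            case 2 then show ?thesis using sI_z gl_z True N.sH cIH by auto
          next
            case 3 then show ?thesis using sI_H sI_c gl_H N.sH aA by (cases "u = cI") auto
          qed
          qed
        qed
        then have "?S = HI" using conn_closD[OF W sI_HI gHI] by blast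
        then have "HB \<subseteq> ?T" unfolding HI_def using HB_H zHB by blast
        then show ?thesis using SH unfolding HB_def by auto
      next
        case False
        have "clos HI sI (glue aA aB) ?T" unfolding clos_def
        proof (intro conjI ballI)
          show "?T \<subseteq> HI" using Tsub unfolding HI_def by auto
        next
          fix u assume u: "u \<in> ?T"
          then obtain v where v: "u = off + v" "v \<in> S" by auto
          have vH: "v \<in> HM" "v \<noteq> rM" using v SH False by auto
          show "sI u \<in> ?T" using sI_B vH v S(1) by (auto simp: clos_def)
          show "glue aA aB u \<in> ?T" using gl_B vH v S(1) by (auto simp: clos_def)
        qed
        then have "?T = HI" using conn_closD[OF W sI_HI gHI] S(2) by blast
        then show ?thesis using Tsub zHB unfolding HI_def by auto
      qed
    qed
  next
    assume C: "connected_hes H s aA \<and> connected_hes HM sM aB"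
    show "connected_hes HI sI (glue aA aB)"
    proof (rule conn_closI[OF sI_HI gHI])
      fix S assume S: "clos HI sI (glue aA aB) S" "S \<noteq> {}"
      have cl: "u \<in> S \<Longrightarrow> sI u \<in> S" "u \<in> S \<Longrightarrow> glue aA aB u \<in> S" for u
        using S(1) by (auto simp: clos_def)
      have SHI: "S \<subseteq> HI" using S(1) by (simp add: clos_def)
      let ?SA = "S \<inter> H" and ?SB = "{v \<in> HM. off + v \<in> S}"
      have cA: "clos H s aA ?SA" unfolding clos_def
      proof (intro conjI ballI)
        fix u assume u: "u \<in> ?SA"
        show "s u \<in> ?SA"
        proof (cases "u = cI")
          case True
          then have "z \<in> S" using cl(1)[of u] u sI_c by auto
          then show ?thesis using cl(1)[of z] sI_z True N.sH cIH by auto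
        next
          case False then show ?thesis using cl(1)[of u] u sI_H N.sH by auto
        qed
        show "aA u \<in> ?SA" using cl(2)[of u] u gl_H aA by auto
      qed auto
      have cB: "clos HM sM aB ?SB" unfolding clos_def
      proof (intro conjI ballI)
        fix v assume v: "v \<in> ?SB"
        show "sM v \<in> ?SB" using cl(1)[of "off + v"] v sI_B M.sH by auto
        show "aB v \<in> ?SB"
        proof (cases "v = rM")
          case True then show ?thesis using v aBr by simp
        next
          case False then show ?thesis using cl(2)[of "off + v"] v gl_B aB by auto
        qed
      qed auto
      have fullA: "?SA = H \<Longrightarrow> ?SB = HM"
      proof -
        assume "?SA = H"
        then have "cI \<in> S" using cIH by auto
        then have "z \<in> S" using cl(1) sI_c by metis
        then have "off + rM \<in> S" using cl(2) gl_z by metis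
        then have "?SB \<noteq> {}" using M.rH by auto
        then show ?thesis using conn_closD[OF conjunct2[OF C] M.sH' aB cB] by blast
      qed
      have fullB: "?SB = HM \<Longrightarrow> ?SA = H"
      proof -
        assume "?SB = HM"
        then have "off + rM \<in> S" using M.rH by auto
        then have "z \<in> S" using cl(2) gl_r by metis
        then have "s cI \<in> S" using cl(1) sI_z by metis
        then have "?SA \<noteq> {}" using N.sH cIH by auto
        then show ?thesis using conn_closD[OF conjunct1[OF C] N.sH' aA cA] by blast
      qed
      have "?SA \<noteq> {} \<or> ?SB \<noteq> {}"
      proof -
        obtain u where u: "u \<in> S" using S(2) by auto
        consider "u \<in> H" | "u \<in> HB" | "u = z" using u SHI unfolding HI_def by auto
        then show ?thesis
        proof cases
          case 1 then show ?thesis using u by auto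
        next
          case 2 then show ?thesis using u HB_E by (metis (mono_tags, lifting) empty_iff mem_Collect_eq)
        next
          case 3 then show ?thesis using cl(1)[of u] u sI_z N.sH cIH by auto
        qed
      qed
      then have AB: "?SA = H" "?SB = HM"
        using fullA fullB conn_closD[OF conjunct1[OF C] N.sH' aA cA]
          conn_closD[OF conjunct2[OF C] M.sH' aB cB] by blast+
      have "z \<in> S" using AB(1) cIH cl(1) sI_c by (metis IntE)
      moreover have "HB \<subseteq> S" using AB(2) unfolding HB_def by auto
      moreover have "H \<subseteq> S" using AB(1) by auto
      ultimately show "S = HI" using SHI unfolding HI_def by auto
    qed
  qed
qed

end


lemma invol_in: "invol X a \<Longrightarrow> \<forall>u\<in>X. a u \<in> X" by (simp add: invol_def)

context rmI begin

lemma stI_Suc: "stI (Suc i) = stp HI sI (stI i)" by (simp add: stI_def)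


lemma glue_bridge_z:
  assumes aA: "\<forall>u\<in>H. aA u \<in> H" and aB: "\<forall>u\<in>HM. aB u \<in> HM"
  shows "is_bridge HI sI (glue aA aB) z"
proof -
  let ?b = "cut_edge (glue aA aB) z"
  have bz: "?b z = z" "?b (off + rM) = off + rM" using gl_z by (auto simp: cut_edge_def)
  have bo: "?b u = glue aA aB u" if "u \<noteq> z" "u \<noteq> off + rM" for u
    using that gl_z by (simp add: cut_edge_def)
  have bHI: "\<forall>u\<in>HI. ?b u \<in> HI"
  proof
    fix u assume u: "u \<in> HI"
    show "?b u \<in> HI"
    proof (cases "u = z \<or> u = off + rM")
      case True then show ?thesis using bz u by auto
    next
      case False then show ?thesis using bo gl_HI[OF aA aB] u by simp
    qed
  qed
  have "clos HI sI ?b HB" unfolding clos_def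
  proof (intro conjI ballI)
    show "HB \<subseteq> HI" unfolding HI_def by auto
  next
    fix u assume u: "u \<in> HB"
    then obtain v where v: "u = off + v" "v \<in> HM" using HB_E by metis
    show "sI u \<in> HB" using sI_B v M.sH HB_iff by simp
    show "?b u \<in> HB"
    proof (cases "v = rM")
      case True then show ?thesis using bz v rMB by simp
    next
      case False
      have "u \<noteq> z" using u zHB by auto
      moreover have "u \<noteq> off + rM" using v False by simp
      ultimately have "?b u = off + aB v" using bo gl_B v False by simp
      then show ?thesis using aB v HB_iff by simp
    qed
  qed
  moreover have "HB \<noteq> {}" using rMB by auto
  moreover have "HB \<noteq> HI" using zHB unfolding HI_def by auto
  ultimately have "\<not> connected_hes HI sI ?b" using conn_closD[OF _ sI_HI bHI] by blast
  moreover have "glue aA aB z \<noteq> z" using gl_z rMB zHB by auto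
  ultimately show ?thesis by (simp add: is_bridge_def)
qed

lemma IA:
  assumes ai: "invol H aA" and bi: "invol HM aB" and bc: "connected_hes HM sM aB" and br: "aB rM = rM"
    and hH: "h \<in> H" and su: "sI u = s h"
  shows "stp HI sI (glue aA aB, u) = (glue (fst (stp H s (aA, h))) aB, snd (stp H s (aA, h)))"
proof -
  let ?g = "s h"
  have gH: "?g \<in> H" using hH N.sH by auto
  have agH: "aA ?g \<in> H" using ai gH by (simp add: invol_def)
  have e1: "glue aA aB ?g = aA ?g" using gl_H gH by simp
  have e2: "cut_edge (glue aA aB) ?g = glue (cut_edge aA ?g) aB"
  proof
    fix u show "cut_edge (glue aA aB) ?g u = glue (cut_edge aA ?g) aB u"
      unfolding cut_edge_def glue_def using gH agH HB_H zH rMB by auto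
  qed
  have cH': "\<forall>u\<in>H. cut_edge aA ?g u \<in> H" using cut_edge_in[OF ai] by blast
  have e3: "is_bridge HI sI (glue aA aB) ?g = is_bridge H s aA ?g"
    unfolding is_bridge_def e1 e2 using conn_glue[OF cH' invol_in[OF bi] br] bc by simp
  have e4: "cut_edge aA ?g = cut_edge aA ?g" ..
  show ?thesis using su e1 e2 e3 by (simp add: stp_def Let_def)
qed

lemma IB:
  assumes ai: "invol H aA" and ac: "connected_hes H s aA" and bi: "invol HM aB" and br: "aB rM = rM"
    and vH: "v \<in> HM" and sv: "sM v \<noteq> rM"
  shows "stp HI sI (glue aA aB, off + v) = (glue aA (fst (stp HM sM (aB, v))), off + snd (stp HM sM (aB, v)))"
proof -
  let ?g = "sM v"
  have gH: "?g \<in> HM" using vH M.sH by auto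
  have agH: "aB ?g \<in> HM" using bi gH by (simp add: invol_def)
  have agr: "aB ?g \<noteq> rM" using bi gH br sv by (metis invol_def)
  have sI': "sI (off + v) = off + ?g" using sI_B vH by simp
  have e1: "glue aA aB (off + ?g) = off + aB ?g" by (rule gl_B[OF gH sv])
  have e2: "cut_edge (glue aA aB) (off + ?g) = glue aA (cut_edge aB ?g)"
  proof
    fix u
    consider "u = off + ?g" | "u = off + aB ?g" | "u \<noteq> off + ?g" "u \<noteq> off + aB ?g" by blast
    then show "cut_edge (glue aA aB) (off + ?g) u = glue aA (cut_edge aB ?g) u"
    proof cases
      case 1 then show ?thesis using gl_B[OF gH sv, of aA "cut_edge aB ?g"] by (simp add: cut_edge_def)
    next
      case 2 then show ?thesis using gl_B[OF agH agr, of aA "cut_edge aB ?g"] e1 by (simp add: cut_edge_def)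
    next
      case 3
      then have l: "cut_edge (glue aA aB) (off + ?g) u = glue aA aB u" using e1 by (simp add: cut_edge_def)
      have "glue aA aB u = glue aA (cut_edge aB ?g) u"
      proof (cases "u \<in> HB \<and> u \<noteq> off + rM")
        case True
        then obtain w where w: "u = off + w" "w \<in> HM" "w \<noteq> rM" using HB_E by metis
        then have "w \<noteq> ?g" "w \<noteq> aB ?g" using 3 by auto
        then show ?thesis using gl_B[OF w(2,3)] w(1) by (simp add: cut_edge_def)
      next
        case False then show ?thesis unfolding glue_def by auto
      qed
      then show ?thesis using l by simp
    qed
  qed
  have cH': "\<forall>u\<in>HM. cut_edge aB ?g u \<in> HM" using cut_edge_in[OF bi] by blast
  have cr: "cut_edge aB ?g rM = rM" using br sv agr by (simp add: cut_edge_def)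
  have e3: "is_bridge HI sI (glue aA aB) (off + ?g) = is_bridge HM sM aB ?g"
    unfolding is_bridge_def e1 e2
  proof -
    have c1: "connected_hes H s aA" by (rule ac)
    show "(off + aB ?g \<noteq> off + ?g \<and> \<not> connected_hes HI sI (glue aA (cut_edge aB ?g))) =
      (aB ?g \<noteq> ?g \<and> \<not> connected_hes HM sM (cut_edge aB ?g))"
      using conn_glue[OF invol_in[OF ai] cH' cr] c1 by simp
  qed
  show ?thesis using sI' e1 e2 e3 by (simp add: stp_def Let_def)
qed

end

context rmI begin

lemma IC:
  assumes aA: "\<forall>u\<in>H. aA u \<in> H" and aB: "\<forall>u\<in>HM. aB u \<in> HM" and su: "sI u = z"
  shows "stp HI sI (glue aA aB, u) = (glue aA aB, off + rM)"
  using glue_bridge_z[OF aA aB] su gl_z by (simp add: stp_def Let_def)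

lemma ID:
  assumes aA: "\<forall>u\<in>H. aA u \<in> H" and aB: "\<forall>u\<in>HM. aB u \<in> HM" and vH: "v \<in> HM" and sv: "sM v = rM"
  shows "stp HI sI (glue aA aB, off + v) = (glue aA aB, z)"
proof -
  have g: "sI (off + v) = off + rM" using sI_B vH sv by simp
  have "is_bridge HI sI (glue aA aB) (glue aA aB (off + rM)) = is_bridge HI sI (glue aA aB) (off + rM)"
    by (rule is_bridge_sym) (simp add: gl_r gl_z)
  then have "is_bridge HI sI (glue aA aB) (off + rM)" using glue_bridge_z[OF aA aB] gl_r by simp
  then show ?thesis using g gl_r by (simp add: stp_def Let_def)
qed

abbreviation "n \<equiv> card H"
abbreviation "m \<equiv> card HM"

lemma stI_0: "stI 0 = (glue (N.al 0) (M.al 0), r)"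
  by (simp add: stI_def N.st_def M.st_def aI0_def)

lemma P1: "j \<le> l - 1 \<Longrightarrow> stI j = (glue (N.al j) (M.al 0), N.cu j)"
proof (induction j)
  case 0 then show ?case using stI_0 N.cu_0 by simp
next
  case (Suc j)
  have IH: "stI j = (glue (N.al j) (M.al 0), N.cu j)" using Suc by simp
  have "N.cu j \<noteq> cI" unfolding cI_def using N.cu_distinct[of j "l - 1"] Suc.prems ln by simp
  then have "sI (N.cu j) = s (N.cu j)" using sI_H N.cu_H by simp
  then have "stI (Suc j) = (glue (fst (stp H s (N.st j))) (M.al 0), snd (stp H s (N.st j)))"
    using IA[OF N.al_invol M.al_invol M.al_con M.al_r N.cu_H] IH by (simp add: stI_Suc)
  then show ?case by (simp only: N.st_Suc[symmetric])
qed

lemma P2: "stI l = (glue (N.al (l - 1)) (M.al 0), off + rM)"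
proof -
  have e: "stI (Suc (l - 1)) = stp HI sI (glue (N.al (l - 1)) (M.al 0), N.cu (l - 1))"
    using P1[of "l - 1"] by (simp add: stI_Suc)
  have "sI (N.cu (l - 1)) = z" using sI_c cI_def by simp
  then have "stI (Suc (l - 1)) = (glue (N.al (l - 1)) (M.al 0), off + rM)"
    using e IC[OF invol_in[OF N.al_invol] invol_in[OF M.al_invol]] by simp
  then show ?thesis using l1 by simp
qed

lemma P3: "j \<le> m - 1 \<Longrightarrow> stI (l + j) = (glue (N.al (l - 1)) (M.al j), off + M.cu j)"
proof (induction j)
  case 0 then show ?case using P2 M.cu_0 by simp
next
  case (Suc j)
  have IH: "stI (l + j) = (glue (N.al (l - 1)) (M.al j), off + M.cu j)" using Suc by simp
  have "sM (M.cu j) \<noteq> rM" using M.s_cu_ne[of j] Suc.prems M.cardH_pos by simp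
  then have "stI (Suc (l + j)) = (glue (N.al (l - 1)) (fst (stp HM sM (M.st j))), off + snd (stp HM sM (M.st j)))"
    using IB[OF N.al_invol N.al_con M.al_invol M.al_r M.cu_H] IH by (simp add: stI_Suc)
  then show ?case by (simp only: M.st_Suc[symmetric] add_Suc_right)
qed

lemma P4: "stI (l + m) = (glue (N.al (l - 1)) (M.al (m - 1)), z)"
proof -
  have e: "stI (Suc (l + (m - 1))) = stp HI sI (glue (N.al (l - 1)) (M.al (m - 1)), off + M.cu (m - 1))"
    using P3[of "m - 1"] by (simp add: stI_Suc)
  have "stI (Suc (l + (m - 1))) = (glue (N.al (l - 1)) (M.al (m - 1)), z)"
    using e ID[OF invol_in[OF N.al_invol] invol_in[OF M.al_invol] M.cu_H M.s_cu_last] by simp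
  then show ?thesis using M.cardH_pos by simp
qed

lemma P5: "l \<le> j \<Longrightarrow> j \<le> n \<Longrightarrow> stI (j + m + 1) = (glue (N.al j) (M.al (m - 1)), N.cu j)"
proof (induction j rule: dec_induct)
  case base
  have "sI z = s (N.cu (l - 1))" using sI_z cI_def by simp
  then have "stI (Suc (l + m)) = (glue (fst (stp H s (N.st (l - 1)))) (M.al (m - 1)), snd (stp H s (N.st (l - 1))))"
    using IA[OF N.al_invol M.al_invol M.al_con M.al_r N.cu_H] P4 by (simp add: stI_Suc)
  moreover have "N.st l = stp H s (N.st (l - 1))" using N.st_Suc[of "l - 1"] l1 by simp
  ultimately show ?case by simp
next
  case (step j)
  have IH: "stI (j + m + 1) = (glue (N.al j) (M.al (m - 1)), N.cu j)" using step by simp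
  have "N.cu (l - 1) \<noteq> N.cu j" using N.cu_distinct[of "l - 1" j] step l1 by simp
  then have "N.cu j \<noteq> cI" unfolding cI_def by metis
  then have "sI (N.cu j) = s (N.cu j)" using sI_H N.cu_H by simp
  then have "stI (Suc (j + m + 1)) = (glue (fst (stp H s (N.st j))) (M.al (m - 1)), snd (stp H s (N.st j)))"
    using IA[OF N.al_invol M.al_invol M.al_con M.al_r N.cu_H] IH by (simp add: stI_Suc)
  then show ?case by (simp only: N.st_Suc[symmetric]) simp
qed

end

lemma bfl_from:
  assumes ne: "\<And>i. 0 < i \<Longrightarrow> i < L \<Longrightarrow> snd (bfl_state X i) \<noteq> rt X"
    and eq: "snd (bfl_state X L) = rt X" and L0: "0 < L"
  shows "bfl_len X = L" "i < L \<Longrightarrow> bfl X ! i = snd (bfl_state X i)"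
proof -
  show bl: "bfl_len X = L"
    unfolding bfl_len_def
  proof (rule Least_equality)
    show "0 < L \<and> snd (bfl_state X L) = rt X" using eq L0 by simp
  next
    fix y assume "0 < y \<and> snd (bfl_state X y) = rt X"
    then show "L \<le> y" using ne by (meson not_le)
  qed
  show "i < L \<Longrightarrow> bfl X ! i = snd (bfl_state X i)" unfolding bfl_def bl by simp
qed

lemma rmap_rm: "is_rmap N \<Longrightarrow> rm (hes N) (sig N) (alp N) (rt N)"
  unfolding is_rmap_def by unfold_locales (auto simp: invol_def)

lemma bfl_state_st: assumes "is_rmap N" shows "bfl_state N i = rm.st (hes N) (sig N) (alp N) (rt N) i"
proof -
  interpret rm "hes N" "sig N" "alp N" "rt N" using rmap_rm[OF assms] .
  show ?thesis unfolding bfl_state_def st_def bfl_step_stp by (rule refl)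
qed

lemma bfl_N:
  assumes "is_rmap N"
  shows "bfl_len N = card (hes N)"
    and "i < card (hes N) \<Longrightarrow> bfl N ! i = snd (rm.st (hes N) (sig N) (alp N) (rt N) i)"
proof -
  interpret rm "hes N" "sig N" "alp N" "rt N" using rmap_rm[OF assms] .
  have ne: "\<And>i. 0 < i \<Longrightarrow> i < card (hes N) \<Longrightarrow> snd (bfl_state N i) \<noteq> rt N"
    using cu_ne_r bfl_state_st[OF assms] by simp
  have eq: "snd (bfl_state N (card (hes N))) = rt N" using cu_T bfl_state_st[OF assms] by simp
  show "bfl_len N = card (hes N)" using bfl_from(1)[OF ne eq cardH_pos] .
  show "i < card (hes N) \<Longrightarrow> bfl N ! i = snd (rm.st (hes N) (sig N) (alp N) (rt N) i)"
    using bfl_from(2)[OF ne eq cardH_pos] bfl_state_st[OF assms] by simp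
qed

lemma bfl_facts:
  assumes "is_rmap N"
  shows "i < card (hes N) \<Longrightarrow> bfl N ! i \<in> hes N"
    and "i < j \<Longrightarrow> j < card (hes N) \<Longrightarrow> bfl N ! i \<noteq> bfl N ! j"
    and "bfl N ! 0 = rt N"
    and "0 < card (hes N)"
proof -
  interpret rm "hes N" "sig N" "alp N" "rt N" using rmap_rm[OF assms] .
  show "i < card (hes N) \<Longrightarrow> bfl N ! i \<in> hes N" using bfl_N(2)[OF assms] cu_H by simp
  show "i < j \<Longrightarrow> j < card (hes N) \<Longrightarrow> bfl N ! i \<noteq> bfl N ! j" using bfl_N(2)[OF assms] cu_distinct by simp
  show "bfl N ! 0 = rt N" using bfl_N(2)[OF assms, of 0] cardH_pos cu_0 by simp
  show "0 < card (hes N)" by (rule cardH_pos)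
qed

lemma R_corners:
  assumes N: "is_rmap N" and k1: "1 \<le> k" and kn: "k \<le> card (hes N)"
  shows "bfl_len (R_op k N) = card (hes N) + 2"
    and "i < card (hes N) + 2 \<Longrightarrow> bfl (R_op k N) ! i =
      (if i = 0 then rt N else if i \<le> k then (if i = 1 then fresh (hes N) else bfl N ! (i - 1))
       else if i = k + 1 then Suc (fresh (hes N)) else bfl N ! (i - 2))"
proof -
  interpret rmR "hes N" "sig N" "alp N" "rt N" k
    using rmap_rm[OF N] k1 kn by (simp add: rmR_def rmR_axioms_def)
  have cc: "bfl_corner N k = c" unfolding bfl_corner_def c_def using bfl_N(2)[OF N, of "k - 1"] kn k1 by simp
  have rec: "R_op k N = \<lparr>hes = HR, sig = sR, alp = aR0, rt = rt N\<rparr>"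
    unfolding R_op_def cc Let_def HR_def sR_def aR0_def x_def y_def by simp
  have bs: "bfl_state (R_op k N) i = stR i" for i
    unfolding bfl_state_def rec stR_def bfl_step_stp by simp
  define f where "f i = (if i = 0 then rt N else if i \<le> k then pos (i - 1)
       else if i = k + 1 then y else cu (i - 2))" for i
  have sf: "i \<le> card (hes N) + 2 \<Longrightarrow> snd (stR i) = f i" for i
  proof -
    assume i: "i \<le> card (hes N) + 2"
    consider "i = 0" | "1 \<le> i" "i \<le> k" | "i = k + 1" | "k + 2 \<le> i" by linarith
    then show ?thesis
    proof cases
      case 1 then show ?thesis using stR_0 f_def by simp
    next
      case 2 then show ?thesis using R2[of "i - 1"] f_def by simp
    next
      case 3 then show ?thesis using R3 f_def by simp
    next
      case 4
      then have "snd (stR (i - 2 + 2)) = cu (i - 2)" using R4[of "i - 2"] i by simp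
      moreover have ii: "i - 2 + 2 = i" using 4 by simp
      moreover have fi: "f i = cu (i - 2)" using 4 unfolding f_def by simp
      ultimately show ?thesis by (simp only: ii)
    qed
  qed
  have rR: "rt (R_op k N) = rt N" using rec by simp
  have ne: "\<And>i. 0 < i \<Longrightarrow> i < card (hes N) + 2 \<Longrightarrow> snd (bfl_state (R_op k N) i) \<noteq> rt (R_op k N)"
  proof -
    fix i assume i: "0 < i" "i < card (hes N) + 2"
    have "f i \<noteq> rt N"
    proof -
      consider "1 \<le> i" "i \<le> k" | "i = k + 1" | "k + 2 \<le> i" using i by linarith
      then show ?thesis
      proof cases
        case 1 then show ?thesis unfolding f_def pos_def using xH rH cu_ne_r[of "i - 1"] kn by auto
      next
        case 2 then show ?thesis unfolding f_def using yH rH by auto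
      next
        case 3 then show ?thesis unfolding f_def using cu_ne_r[of "i - 2"] i k1 by auto
      qed
    qed
    then show "snd (bfl_state (R_op k N) i) \<noteq> rt (R_op k N)" using bs sf i rR by simp
  qed
  have eq: "snd (bfl_state (R_op k N) (card (hes N) + 2)) = rt (R_op k N)"
    using bs sf[of "card (hes N) + 2"] rR f_def cu_T kn by simp
  show "bfl_len (R_op k N) = card (hes N) + 2" using bfl_from(1)[OF ne eq] by simp
  show "i < card (hes N) + 2 \<Longrightarrow> bfl (R_op k N) ! i =
      (if i = 0 then rt N else if i \<le> k then (if i = 1 then fresh (hes N) else bfl N ! (i - 1))
       else if i = k + 1 then Suc (fresh (hes N)) else bfl N ! (i - 2))"
  proof -
    assume i: "i < card (hes N) + 2"
    have "bfl (R_op k N) ! i = f i" using bfl_from(2)[OF ne eq _ i] bs sf[of i] i by simp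
    also have "\<dots> = (if i = 0 then rt N else if i \<le> k then (if i = 1 then fresh (hes N) else bfl N ! (i - 1))
       else if i = k + 1 then Suc (fresh (hes N)) else bfl N ! (i - 2))"
      unfolding f_def pos_def x_def y_def using bfl_N(2)[OF N] i kn by auto
    finally show ?thesis .
  qed
qed

lemma I_corners:
  assumes N: "is_rmap N" and M: "is_rmap M" and l1: "1 \<le> l" and ln: "l \<le> card (hes N)"
  shows "bfl_len (Ins_op M l N) = card (hes N) + card (hes M) + 1"
    and "i < card (hes N) + card (hes M) + 1 \<Longrightarrow> bfl (Ins_op M l N) ! i =
      (if i < l then bfl N ! i else if i < l + card (hes M) then fresh (hes N) + bfl M ! (i - l)
       else if i = l + card (hes M) then fresh (hes N) + fresh (hes M) else bfl N ! (i - card (hes M) - 1))"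
proof -
  interpret rmI "hes N" "sig N" "alp N" "rt N" "hes M" "sig M" "alp M" "rt M" l
    using rmap_rm[OF N] rmap_rm[OF M] l1 ln by (simp add: rmI_def rmI_axioms_def)
  have cc: "bfl_corner N l = cI" unfolding bfl_corner_def cI_def using bfl_N(2)[OF N, of "l - 1"] ln l1 by simp
  have rec: "Ins_op M l N = \<lparr>hes = HI, sig = sI, alp = aI0, rt = rt N\<rparr>"
    unfolding Ins_op_def cc Let_def HI_def sI_def aI0_def glue_def off_def z_def HB_def by simp
  have bs: "bfl_state (Ins_op M l N) i = stI i" for i
    unfolding bfl_state_def rec stI_def bfl_step_stp by simp
  define f where "f i = (if i < l then N.cu i else if i < l + m then off + M.cu (i - l)
       else if i = l + m then z else N.cu (i - m - 1))" for i
  have sf: "i \<le> n + m + 1 \<Longrightarrow> snd (stI i) = f i" for i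
  proof -
    assume i: "i \<le> n + m + 1"
    consider "i < l" | "l \<le> i" "i < l + m" | "i = l + m" | "l + m < i" by linarith
    then show ?thesis
    proof cases
      case 1 then show ?thesis using P1[of i] f_def by simp
    next
      case 2
      then have "snd (stI (l + (i - l))) = off + M.cu (i - l)" using P3[of "i - l"] by simp
      moreover have ii: "l + (i - l) = i" using 2 by simp
      moreover have "f i = off + M.cu (i - l)" using 2 unfolding f_def by simp
      ultimately show ?thesis by (simp only: ii)
    next
      case 3 then show ?thesis using P4 f_def by simp
    next
      case 4
      then have "snd (stI (i - m - 1 + m + 1)) = N.cu (i - m - 1)" using P5[of "i - m - 1"] i by simp
      moreover have ii: "i - m - 1 + m + 1 = i" using 4 by simp
      moreover have "f i = N.cu (i - m - 1)" using 4 unfolding f_def by simp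
      ultimately show ?thesis by (simp only: ii)
    qed
  qed
  have rI: "rt (Ins_op M l N) = rt N" using rec by simp
  have ne: "\<And>i. 0 < i \<Longrightarrow> i < n + m + 1 \<Longrightarrow> snd (bfl_state (Ins_op M l N) i) \<noteq> rt (Ins_op M l N)"
  proof -
    fix i assume i: "0 < i" "i < n + m + 1"
    have "f i \<noteq> rt N"
    proof -
      consider "i < l" | "l \<le> i" "i < l + m" | "i = l + m" | "l + m < i" by linarith
      then show ?thesis
      proof cases
        case 1 then show ?thesis unfolding f_def using N.cu_ne_r[of i] i ln by auto
      next
        case 2
        have "off + M.cu (i - l) \<in> HB" using HB_iff M.cu_H by simp
        then show ?thesis unfolding f_def using 2 HB_H N.rH by auto
      next
        case 3 then show ?thesis unfolding f_def using zH N.rH by auto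
      next
        case 4 then show ?thesis unfolding f_def using N.cu_ne_r[of "i - m - 1"] i l1 by auto
      qed
    qed
    then show "snd (bfl_state (Ins_op M l N) i) \<noteq> rt (Ins_op M l N)" using bs sf i rI by simp
  qed
  have eq: "snd (bfl_state (Ins_op M l N) (n + m + 1)) = rt (Ins_op M l N)"
  proof -
    have "f (n + m + 1) = N.cu n" unfolding f_def using ln by simp
    then show ?thesis using bs sf[of "n + m + 1"] rI N.cu_T by simp
  qed
  show "bfl_len (Ins_op M l N) = n + m + 1" using bfl_from(1)[OF ne eq] by simp
  show "i < n + m + 1 \<Longrightarrow> bfl (Ins_op M l N) ! i =
      (if i < l then bfl N ! i else if i < l + m then fresh (hes N) + bfl M ! (i - l)
       else if i = l + m then fresh (hes N) + fresh (hes M) else bfl N ! (i - m - 1))"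
  proof -
    assume i: "i < n + m + 1"
    have "bfl (Ins_op M l N) ! i = f i" using bfl_from(2)[OF ne eq _ i] bs sf[of i] i by simp
    also have "\<dots> = (if i < l then bfl N ! i else if i < l + m then fresh (hes N) + bfl M ! (i - l)
       else if i = l + m then fresh (hes N) + fresh (hes M) else bfl N ! (i - m - 1))"
      unfolding f_def off_def z_def using bfl_N(2)[OF N] bfl_N(2)[OF M] i ln by auto
    finally show ?thesis .
  qed
qed


lemma msize_closed:
  assumes M: "is_rmap M" and cl: "closed_map M"
  shows "2 * msize M = card (hes M) + 1"
proof -
  let ?H = "hes M" and ?a = "alp M" and ?r = "rt M"
  have fin: "finite ?H" and inv: "\<And>x. x \<in> ?H \<Longrightarrow> ?a x \<in> ?H \<and> ?a (?a x) = x"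
    and rH: "?r \<in> ?H" and ar: "?a ?r = ?r"
    using M unfolding is_rmap_def by auto
  have fx: "\<And>x. x \<in> ?H \<Longrightarrow> ?a x = x \<Longrightarrow> x = ?r" using cl unfolding closed_map_def by auto
  define E where "E = {{x, ?a x} | x. x \<in> ?H}"
  define E' where "E' = {{x, ?a x} | x. x \<in> ?H - {?r}}"
  have EE: "E = insert {?r} E'" unfolding E_def E'_def using rH ar by auto
  have rE': "{?r} \<notin> E'"
  proof
    assume "{?r} \<in> E'"
    then obtain x where x: "x \<in> ?H - {?r}" "{?r} = {x, ?a x}" unfolding E'_def by auto
    then show False by auto
  qed
  have finE': "finite E'" unfolding E'_def using fin by simp
  have c2: "\<And>e. e \<in> E' \<Longrightarrow> card e = 2"
  proof -
    fix e assume "e \<in> E'"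
    then obtain x where x: "x \<in> ?H - {?r}" "e = {x, ?a x}" unfolding E'_def by auto
    then have "?a x \<noteq> x" using fx by auto
    then show "card e = 2" using x by auto
  qed
  have U: "\<Union>E' = ?H - {?r}"
  proof
    show "\<Union>E' \<subseteq> ?H - {?r}"
    proof
      fix u assume "u \<in> \<Union>E'"
      then obtain x where x: "x \<in> ?H - {?r}" "u = x \<or> u = ?a x" unfolding E'_def by auto
      have "?a x \<noteq> ?r"
      proof
        assume "?a x = ?r"
        then have "?a (?a x) = ?r" using ar by simp
        then show False using x inv by auto
      qed
      then show "u \<in> ?H - {?r}" using x inv by auto
    qed
    show "?H - {?r} \<subseteq> \<Union>E'" unfolding E'_def by blast
  qed
  have pw: "pairwise disjnt E'"
    unfolding pairwise_def disjnt_def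
  proof (intro ballI impI)
    fix e1 e2 assume e: "e1 \<in> E'" "e2 \<in> E'" "e1 \<noteq> e2"
    obtain x where x: "x \<in> ?H" "e1 = {x, ?a x}" using e unfolding E'_def by auto
    obtain y where y: "y \<in> ?H" "e2 = {y, ?a y}" using e unfolding E'_def by auto
    show "e1 \<inter> e2 = {}"
    proof (rule ccontr)
      assume "e1 \<inter> e2 \<noteq> {}"
      then obtain u where u: "u \<in> e1" "u \<in> e2" by auto
      have key: "\<And>w. w \<in> ?H \<Longrightarrow> u \<in> {w, ?a w} \<Longrightarrow> {w, ?a w} = {u, ?a u}"
      proof -
        fix w assume w: "w \<in> ?H" "u \<in> {w, ?a w}"
        then consider "u = w" | "u = ?a w" by blast
        then show "{w, ?a w} = {u, ?a u}"
        proof cases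
          case 1 then show ?thesis by simp
        next
          case 2 then have "?a u = w" using inv w(1) by simp
          then show ?thesis using 2 by (simp add: insert_commute)
        qed
      qed
      have "e1 = {u, ?a u}" using key[OF x(1)] u(1) x(2) by simp
      moreover have "e2 = {u, ?a u}" using key[OF y(1)] u(2) y(2) by simp
      ultimately have "e1 = e2" by simp
      then show False using e by simp
    qed
  qed
  have "card (?H - {?r}) = sum card E'"
    using card_Union_disjoint[OF pw] c2 U by (metis card.infinite zero_neq_numeral)
  also have "\<dots> = 2 * card E'" using c2 by simp
  finally have a: "card ?H - 1 = 2 * card E'" using rH fin by simp
  have "msize M = card E" unfolding msize_def E_def by (rule refl)
  also have "\<dots> = card E' + 1" unfolding EE using rE' finE' by simp
  finally have ms: "msize M = card E' + 1" .
  have "card ?H > 0" using fin rH card_gt_0_iff by auto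
  then show ?thesis using a ms by simp
qed


lemma fresh_gt': "finite H \<Longrightarrow> u \<in> H \<Longrightarrow> fresh H > u" using fresh_gt by blast

context
  fixes M X :: cmap and l :: nat
  assumes fX: "finite (hes X)" and fM: "finite (hes M)" and cX: "bfl_corner X l \<in> hes X"
begin

lemma Ins_hes: "hes (Ins_op M l X) = hes X \<union> (\<lambda>u. fresh (hes X) + u) ` hes M \<union> {fresh (hes X) + fresh (hes M)}"
  unfolding Ins_op_def Let_def by simp

lemma Ins_rt: "rt (Ins_op M l X) = rt X"
  unfolding Ins_op_def Let_def by simp

lemma Ins_sig_X: "u \<in> hes X \<Longrightarrow> u \<noteq> bfl_corner X l \<Longrightarrow> sig (Ins_op M l X) u = sig X u"
  unfolding Ins_op_def Let_def using fresh_gt'[OF fX] by fastforce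

lemma Ins_sig_c: "sig (Ins_op M l X) (bfl_corner X l) = fresh (hes X) + fresh (hes M)"
  unfolding Ins_op_def Let_def using fresh_gt'[OF fX] cX by fastforce

lemma Ins_sig_z: "sig (Ins_op M l X) (fresh (hes X) + fresh (hes M)) = sig X (bfl_corner X l)"
  unfolding Ins_op_def Let_def using fresh_notin[OF fM] fresh_gt'[OF fX] cX by fastforce

lemma Ins_sig_B: "v \<in> hes M \<Longrightarrow> sig (Ins_op M l X) (fresh (hes X) + v) = fresh (hes X) + sig M v"
  unfolding Ins_op_def Let_def by auto

lemma Ins_alp_X: "u \<in> hes X \<Longrightarrow> alp (Ins_op M l X) u = alp X u"
  unfolding Ins_op_def Let_def using fresh_gt'[OF fX] by fastforce

lemma Ins_alp_z: "alp (Ins_op M l X) (fresh (hes X) + fresh (hes M)) = fresh (hes X) + rt M"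
  unfolding Ins_op_def Let_def using fresh_notin[OF fM] by auto

lemma Ins_alp_r: "alp (Ins_op M l X) (fresh (hes X) + rt M) = fresh (hes X) + fresh (hes M)"
  unfolding Ins_op_def Let_def by auto

lemma Ins_alp_B: "v \<in> hes M \<Longrightarrow> v \<noteq> rt M \<Longrightarrow> alp (Ins_op M l X) (fresh (hes X) + v) = fresh (hes X) + alp M v"
  unfolding Ins_op_def Let_def by auto

end

context
  fixes X :: cmap and k :: nat
  assumes fX: "finite (hes X)" and cX: "bfl_corner X k \<in> hes X" and rX: "rt X \<in> hes X"
begin

lemma R_hes: "hes (R_op k X) = hes X \<union> {fresh (hes X), Suc (fresh (hes X))}"
  unfolding R_op_def Let_def by simp

lemma R_rt: "rt (R_op k X) = rt X"
  unfolding R_op_def Let_def by simp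

lemma xX: "fresh (hes X) \<notin> hes X" using fresh_notin[OF fX] .
lemma yX: "Suc (fresh (hes X)) \<notin> hes X" using fresh_gt'[OF fX] by fastforce

lemma R_sig_r: "sig (R_op k X) (rt X) = fresh (hes X)"
  unfolding R_op_def Let_def using xX yX rX by auto

lemma R_sig_x: "sig (R_op k X) (fresh (hes X)) = (if bfl_corner X k = rt X then Suc (fresh (hes X)) else sig X (rt X))"
  unfolding R_op_def Let_def using xX yX rX cX by auto

lemma R_sig_y: "sig (R_op k X) (Suc (fresh (hes X))) = sig X (bfl_corner X k)"
  unfolding R_op_def Let_def using xX yX rX cX by auto

lemma R_sig_c: "bfl_corner X k \<noteq> rt X \<Longrightarrow> sig (R_op k X) (bfl_corner X k) = Suc (fresh (hes X))"
  unfolding R_op_def Let_def using xX yX rX cX by auto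

lemma R_sig_X: "u \<in> hes X \<Longrightarrow> u \<noteq> rt X \<Longrightarrow> u \<noteq> bfl_corner X k \<Longrightarrow> sig (R_op k X) u = sig X u"
  unfolding R_op_def Let_def using xX yX by auto

lemma R_alp_X: "u \<in> hes X \<Longrightarrow> alp (R_op k X) u = alp X u"
  unfolding R_op_def Let_def using xX yX by auto

lemma R_alp_x: "alp (R_op k X) (fresh (hes X)) = Suc (fresh (hes X))"
  unfolding R_op_def Let_def by auto

lemma R_alp_y: "alp (R_op k X) (Suc (fresh (hes X))) = fresh (hes X)"
  unfolding R_op_def Let_def by auto

end


lemma fresh_eq: "finite S \<Longrightarrow> m \<in> S \<Longrightarrow> (\<And>u. u \<in> S \<Longrightarrow> u \<le> m) \<Longrightarrow> fresh S = Suc m"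
proof -
  assume a: "finite S" "m \<in> S" "\<And>u. u \<in> S \<Longrightarrow> u \<le> m"
  have "Max (insert 0 S) = m" by (rule Max_eqI) (use a in auto)
  then show "fresh S = Suc m" unfolding fresh_def by simp
qed

lemma master:
  assumes N: "is_rmap N" and M: "is_rmap M"
    and cH: "bfl_corner N k \<in> hes N" and cIH: "bfl_corner N l' \<in> hes N"
    and conf: "let cL = bfl_corner (R_op k N) l; c = bfl_corner N k; cI = bfl_corner N l';
       cR = bfl_corner (Ins_op M l' N) k'; x = fresh (hes N); zR = x + fresh (hes M); r = rt N in
       (cL = Suc x \<and> cI = c \<and> cR = c) \<or> (cL = cI \<and> cR = c \<and> cI \<noteq> c \<and> cI \<noteq> r)
       \<or> (cL = x \<and> cI = r \<and> cR = zR \<and> c = r) \<or> (cL = x \<and> cI = r \<and> cR = c \<and> c \<noteq> r)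
       \<or> (cL = c \<and> cI = c \<and> cR = zR \<and> c \<noteq> r)"
  shows "map_iso (Ins_op M l (R_op k N)) (R_op k' (Ins_op M l' N))"
proof -
  define H where "H = hes N"
  define HM where "HM = hes M"
  define r where "r = rt N"
  define rM where "rM = rt M"
  define x where "x = fresh H"
  define f where "f = fresh HM"
  define RN where "RN = R_op k N"
  define IN where "IN = Ins_op M l' N"
  define c where "c = bfl_corner N k"
  define cI where "cI = bfl_corner N l'"
  define cL where "cL = bfl_corner RN l"
  define cR where "cR = bfl_corner IN k'"
  have finH: "finite H" and rH: "r \<in> H" using N unfolding is_rmap_def H_def r_def by auto
  have finM: "finite HM" and rMH: "rM \<in> HM" using M unfolding is_rmap_def HM_def rM_def by auto
  have Hx: "\<And>u. u \<in> H \<Longrightarrow> u < x" unfolding x_def using fresh_gt[OF finH] by blast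
  have Mf: "\<And>v. v \<in> HM \<Longrightarrow> v < f" unfolding f_def using fresh_gt[OF finM] by blast
  have cH': "c \<in> H" "cI \<in> H" using cH cIH c_def cI_def H_def by auto
  have finN: "finite (hes N)" and rN: "rt N \<in> hes N" and finM': "finite (hes M)"
    using finH rH finM H_def r_def HM_def by auto
  have hRN: "hes RN = H \<union> {x, Suc x}" unfolding RN_def H_def x_def using R_hes[OF finN cH rN] by simp
  have fRN: "fresh (hes RN) = x + 2"
  proof -
    have "fresh (hes RN) = Suc (Suc x)"
      by (rule fresh_eq) (use hRN finH in \<open>auto dest: Hx\<close>)
    then show ?thesis by simp
  qed
  have hIN: "hes IN = H \<union> (\<lambda>u. x + u) ` HM \<union> {x + f}"
    unfolding IN_def H_def x_def HM_def f_def using Ins_hes[OF finN finM' cIH] by simp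
  have fIN: "fresh (hes IN) = x + f + 1"
  proof -
    have "fresh (hes IN) = Suc (x + f)"
      by (rule fresh_eq) (use hIN finH finM in \<open>auto dest: Hx Mf\<close>)
    then show ?thesis by simp
  qed
  have finRN: "finite (hes RN)" using hRN finH by simp
  have finIN: "finite (hes IN)" using hIN finH finM by simp
  have conf': "(cL = Suc x \<and> cI = c \<and> cR = c) \<or> (cL = cI \<and> cR = c \<and> cI \<noteq> c \<and> cI \<noteq> r)
       \<or> (cL = x \<and> cI = r \<and> cR = x + f \<and> c = r) \<or> (cL = x \<and> cI = r \<and> cR = c \<and> c \<noteq> r)
       \<or> (cL = c \<and> cI = c \<and> cR = x + f \<and> c \<noteq> r)"
    using conf unfolding Let_def cL_def cI_def cR_def c_def RN_def IN_def x_def f_def H_def HM_def r_def .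
  have cLH: "cL \<in> hes RN" using conf' cH' hRN rH by auto
  have cRH: "cR \<in> hes IN" using conf' cH' hIN rH by auto
  have rIN: "rt IN = r" unfolding IN_def r_def by (rule Ins_rt[OF finN finM' cIH])
  have rIN': "rt IN \<in> hes IN" using rIN hIN rH by auto
  define L where "L = Ins_op M l RN"
  define R where "R = R_op k' IN"
  note cLH' = cLH[unfolded cL_def]
  note cRH' = cRH[unfolded cR_def]
  obtain y where y: "y = Suc x" by simp
  obtain offL where offL: "offL = x + 2" by simp
  obtain zL where zL: "zL = offL + f" by simp
  obtain zR where zR: "zR = x + f" by simp
  obtain x' where x': "x' = zR + 1" by simp
  obtain y' where y': "y' = Suc x'" by simp
  have fRN': "fresh (hes RN) = offL" using fRN offL by simp
  have fIN': "fresh (hes IN) = x'" using fIN x' zR by simp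
  have hRN': "hes RN = H \<union> {x, y}" using hRN y by simp
  have hIN': "hes IN = H \<union> (\<lambda>u. x + u) ` HM \<union> {zR}" using hIN zR by simp
  have hL: "hes L = H \<union> {x, y} \<union> (\<lambda>u. offL + u) ` HM \<union> {zL}"
    unfolding L_def using Ins_hes[OF finRN finM' cLH'] fRN' hRN' HM_def f_def zL by simp
  have hR: "hes R = H \<union> (\<lambda>u. x + u) ` HM \<union> {zR} \<union> {x', y'}"
    unfolding R_def using R_hes[OF finIN cRH' rIN'] fIN' hIN' y' by auto
  define \<phi> where "\<phi> u = (if u \<in> H then u else if u = x then x' else if u = y then y' else u - 2)" for u
  define \<psi> where "\<psi> u = (if u \<in> H then u else if u = x' then x else if u = y' then y else u + 2)" for u
  have xH: "x \<notin> H" "y \<notin> H" using Hx y by (auto dest: Hx)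
  have phiH: "u \<in> H \<Longrightarrow> \<phi> u = u" for u unfolding \<phi>_def by simp
  have phix: "\<phi> x = x'" "\<phi> y = y'" unfolding \<phi>_def using xH y by auto
  have phiB: "v \<in> HM \<Longrightarrow> \<phi> (offL + v) = x + v" for v unfolding \<phi>_def using Hx offL y by force
  have phiz: "\<phi> zL = zR" unfolding \<phi>_def using Hx zL zR offL y by force
  have bij: "bij_betw \<phi> (hes L) (hes R)"
  proof (rule bij_betw_byWitness[where f' = \<psi>])
    show "\<forall>u\<in>hes L. \<psi> (\<phi> u) = u"
      unfolding hL \<phi>_def \<psi>_def using Hx Mf offL zL zR x' y' y by force
    show "\<forall>u\<in>hes R. \<phi> (\<psi> u) = u"
      unfolding hR \<phi>_def \<psi>_def using Hx Mf offL zL zR x' y' y by force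
    show "\<phi> ` hes L \<subseteq> hes R"
      unfolding hL hR using phiH phix phiB phiz by auto
    show "\<psi> ` hes R \<subseteq> hes L"
      unfolding hL hR \<psi>_def using Hx Mf offL zL zR x' y' y by force
  qed
  have sH: "\<And>u. u \<in> H \<Longrightarrow> sig N u \<in> H" and aH: "\<And>u. u \<in> H \<Longrightarrow> alp N u \<in> H"
    using N unfolding is_rmap_def H_def by (auto dest: bij_betwE)
  have sM: "\<And>v. v \<in> HM \<Longrightarrow> sig M v \<in> HM" and aM: "\<And>v. v \<in> HM \<Longrightarrow> alp M v \<in> HM"
    using M unfolding is_rmap_def HM_def by (auto dest: bij_betwE)
  have L1: "\<And>u. u \<in> hes RN \<Longrightarrow> u \<noteq> cL \<Longrightarrow> sig L u = sig RN u"
    "\<And>w. w = cL \<Longrightarrow> sig L w = zL" "sig L zL = sig RN cL"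
    "\<And>v. v \<in> HM \<Longrightarrow> sig L (offL + v) = offL + sig M v"
    "\<And>u. u \<in> hes RN \<Longrightarrow> alp L u = alp RN u"
    "alp L zL = offL + rM" "alp L (offL + rM) = zL"
    "\<And>v. v \<in> HM \<Longrightarrow> v \<noteq> rM \<Longrightarrow> alp L (offL + v) = offL + alp M v"
    unfolding L_def cL_def zL
    using Ins_sig_X[OF finRN finM' cLH'] Ins_sig_c[OF finRN finM' cLH'] Ins_sig_z[OF finRN finM' cLH']
      Ins_sig_B[OF finRN finM' cLH'] Ins_alp_X[OF finRN finM' cLH'] Ins_alp_z[OF finRN finM' cLH']
      Ins_alp_r[OF finRN finM' cLH'] Ins_alp_B[OF finRN finM' cLH']
    unfolding fRN' HM_def f_def rM_def by auto
  have R1: "sig RN r = x" "sig RN x = (if c = r then y else sig N r)" "sig RN y = sig N c"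
    "\<And>w. c \<noteq> r \<Longrightarrow> w = c \<Longrightarrow> sig RN w = y" "\<And>u. u \<in> H \<Longrightarrow> u \<noteq> r \<Longrightarrow> u \<noteq> c \<Longrightarrow> sig RN u = sig N u"
    "\<And>u. u \<in> H \<Longrightarrow> alp RN u = alp N u" "alp RN x = y" "alp RN y = x"
    unfolding RN_def c_def r_def x_def H_def y
    using R_sig_r[OF finN cH rN] R_sig_x[OF finN cH rN] R_sig_y[OF finN cH rN] R_sig_c[OF finN cH rN]
      R_sig_X[OF finN cH rN] R_alp_X[OF finN cH rN] R_alp_x[OF finN cH rN] R_alp_y[OF finN cH rN]
    by auto
  have I1: "\<And>u. u \<in> H \<Longrightarrow> u \<noteq> cI \<Longrightarrow> sig IN u = sig N u" "\<And>w. w = cI \<Longrightarrow> sig IN w = zR" "sig IN zR = sig N cI"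
    "\<And>v. v \<in> HM \<Longrightarrow> sig IN (x + v) = x + sig M v"
    "\<And>u. u \<in> H \<Longrightarrow> alp IN u = alp N u"
    "alp IN zR = x + rM" "alp IN (x + rM) = zR"
    "\<And>v. v \<in> HM \<Longrightarrow> v \<noteq> rM \<Longrightarrow> alp IN (x + v) = x + alp M v"
    unfolding IN_def cI_def H_def x_def HM_def f_def rM_def zR
    using Ins_sig_X[OF finN finM' cIH] Ins_sig_c[OF finN finM' cIH] Ins_sig_z[OF finN finM' cIH]
      Ins_sig_B[OF finN finM' cIH] Ins_alp_X[OF finN finM' cIH] Ins_alp_z[OF finN finM' cIH]
      Ins_alp_r[OF finN finM' cIH] Ins_alp_B[OF finN finM' cIH]
    by auto
  have R2: "sig R r = x'" "sig R x' = (if cR = r then y' else sig IN r)"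
    "sig R y' = sig IN cR"
    "\<And>w. cR \<noteq> r \<Longrightarrow> w = cR \<Longrightarrow> sig R w = y'" "\<And>u. u \<in> hes IN \<Longrightarrow> u \<noteq> r \<Longrightarrow> u \<noteq> cR \<Longrightarrow> sig R u = sig IN u"
    "\<And>u. u \<in> hes IN \<Longrightarrow> alp R u = alp IN u" "alp R x' = y'" "alp R y' = x'"
    unfolding R_def cR_def y'
    using R_sig_r[OF finIN cRH' rIN'] R_sig_x[OF finIN cRH' rIN'] R_sig_y[OF finIN cRH' rIN'] R_sig_c[OF finIN cRH' rIN']
      R_sig_X[OF finIN cRH' rIN'] R_alp_X[OF finIN cRH' rIN'] R_alp_x[OF finIN cRH' rIN'] R_alp_y[OF finIN cRH' rIN']
    unfolding fIN' rIN by auto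
  have rL: "rt L = r" unfolding L_def RN_def r_def using Ins_rt[OF finRN finM' cLH'] R_rt[OF finN cH rN]
    unfolding RN_def by simp
  have rR: "rt R = r" unfolding R_def using R_rt[OF finIN cRH' rIN'] rIN by simp
  have nH: "\<And>u. u \<in> H \<Longrightarrow> u \<noteq> x \<and> u \<noteq> y \<and> u \<noteq> zR \<and> u \<noteq> x' \<and> u \<noteq> y' \<and> u \<noteq> zL"
    using Hx y zR x' y' zL offL by fastforce
  have nB: "\<And>v. v \<in> HM \<Longrightarrow> x + v \<notin> H \<and> offL + v \<notin> H \<and> x + v \<noteq> zR \<and> x + v \<noteq> x' \<and> x + v \<noteq> y'
     \<and> offL + v \<noteq> zL \<and> offL + v \<noteq> x \<and> offL + v \<noteq> y"
    using Hx Mf y zR x' y' zL offL by fastforce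
  have nX: "x \<noteq> y" "zR \<notin> H" "x' \<notin> H" "y' \<notin> H" "zL \<notin> H" "zR \<noteq> x'" "zR \<noteq> y'" "x' \<noteq> y'"
    "zL \<noteq> x" "zL \<noteq> y"
    using Hx y zR x' y' zL offL by (auto dest: Hx)
  have inRN: "\<And>u. u \<in> H \<Longrightarrow> u \<in> hes RN" "x \<in> hes RN" "y \<in> hes RN" using hRN' by auto
  have inIN: "\<And>u. u \<in> H \<Longrightarrow> u \<in> hes IN" "\<And>v. v \<in> HM \<Longrightarrow> x + v \<in> hes IN" "zR \<in> hes IN"
    using hIN' by auto
  have phiHs: "\<And>u. u \<in> H \<Longrightarrow> \<phi> (sig N u) = sig N u" "\<And>u. u \<in> H \<Longrightarrow> \<phi> (alp N u) = alp N u"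
    using phiH sH aH by auto
  have phiBs: "\<And>v. v \<in> HM \<Longrightarrow> \<phi> (offL + sig M v) = x + sig M v" "\<And>v. v \<in> HM \<Longrightarrow> \<phi> (offL + alp M v) = x + alp M v"
    using phiB sM aM by auto
  have nH': "\<And>u. u \<in> H \<Longrightarrow> x \<noteq> u \<and> y \<noteq> u \<and> zR \<noteq> u \<and> x' \<noteq> u \<and> y' \<noteq> u \<and> zL \<noteq> u"
    using nH by metis
  have nB': "\<And>v. v \<in> HM \<Longrightarrow> zR \<noteq> x + v \<and> x' \<noteq> x + v \<and> y' \<noteq> x + v
     \<and> zL \<noteq> offL + v \<and> x \<noteq> offL + v \<and> y \<noteq> offL + v"
    using nB by metis
  have nBH: "\<And>v u. v \<in> HM \<Longrightarrow> u \<in> H \<Longrightarrow> x + v \<noteq> u \<and> u \<noteq> x + v \<and> offL + v \<noteq> u \<and> u \<noteq> offL + v"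
    using nB by metis
  have nX': "y \<noteq> x" "x' \<noteq> zR" "y' \<noteq> zR" "y' \<noteq> x'" "x \<noteq> zL" "y \<noteq> zL"
    using nX by auto
  note basics = nX' nH nH' nB nB' nBH inRN inIN phiH phiHs phiB phiBs phix phiz sH aH sM aM nX rH rMH
  note conf'' = conf'[folded zR y]
  note rules = L1 R1 I1 R2
  have comm: "\<forall>u\<in>hes L. \<phi> (sig L u) = sig R (\<phi> u) \<and> \<phi> (alp L u) = alp R (\<phi> u)"
  proof
    fix u assume u: "u \<in> hes L"
    then consider (H) "u \<in> H" | (X) "u = x" | (Y) "u = y" | (B) v where "v \<in> HM" "u = offL + v"
      | (Z) "u = zL" using hL by auto
    then show "\<phi> (sig L u) = sig R (\<phi> u) \<and> \<phi> (alp L u) = alp R (\<phi> u)"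
    proof cases
      case H
      have a: "\<phi> (alp L u) = alp R (\<phi> u)" using H L1(5) R1(6) inRN phiH phiHs R2(6) inIN I1(5) by simp
      have cr: "\<phi> (sig L r) = sig R (\<phi> r)"
        using conf'' cH' by (elim disjE conjE; simp add: rules basics)
      have cc: "\<phi> (sig L c) = sig R (\<phi> c)"
        using conf'' cH' by (cases "c = r"; elim disjE conjE; simp add: rules basics)
      have ci: "\<phi> (sig L cI) = sig R (\<phi> cI)"
        using conf'' cH' by (cases "c = r"; elim disjE conjE; simp add: rules basics)
      have cg: "u \<noteq> r \<Longrightarrow> u \<noteq> c \<Longrightarrow> u \<noteq> cI \<Longrightarrow> \<phi> (sig L u) = sig R (\<phi> u)"
        using conf'' H cH' by (elim disjE conjE; simp add: rules basics)
      have "\<phi> (sig L u) = sig R (\<phi> u)"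
        using cr cc ci cg by (cases "u = r \<or> u = c \<or> u = cI") auto
      then show ?thesis using a by simp
    next
      case X
      then show ?thesis using conf'' cH' by (elim disjE conjE; simp add: rules basics)
    next
      case Y
      then show ?thesis using conf'' cH' by (elim disjE conjE; simp add: rules basics)
    next
      case B
      then show ?thesis using conf'' cH' nB[OF B(1)] by (cases "v = rM"; elim disjE conjE; simp add: rules basics)
    next
      case Z
      then show ?thesis using conf'' cH' by (elim disjE conjE; simp add: rules basics)
    qed
  qed
  show ?thesis unfolding map_iso_def L_def[symmetric] R_def[symmetric] RN_def[symmetric] IN_def[symmetric]
    using bij comm rL rR phiH rH by auto
qed


theorem lemma3p5:
  fixes M N :: cmap and k l :: nat
  assumes "is_rmap M" and "closed_map M" and "is_rmap N"
  shows "(1 \<le> k \<and> k + 2 \<le> l \<and> l \<le> ncorners N + 2 \<longrightarrow>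
            map_iso (Ins_op M l (R_op k N)) (R_op k (Ins_op M (l - 2) N)))
       \<and> (2 \<le> l \<and> l \<le> k + 1 \<and> k \<le> ncorners N \<longrightarrow>
            map_iso (Ins_op M l (R_op k N)) (R_op (k + 2 * msize M) (Ins_op M (l - 1) N)))"
proof -
  note M = assms(1) and N = assms(3)
  define n where "n = card (hes N)"
  define m where "m = card (hes M)"
  define B where "B = bfl N"
  have ms: "2 * msize M = m + 1" unfolding m_def using msize_closed[OF assms(1,2)] .
  have Bin: "\<And>i. i < n \<Longrightarrow> B ! i \<in> hes N" unfolding B_def n_def using bfl_facts(1)[OF N] by blast
  have Bd: "\<And>i j. i < j \<Longrightarrow> j < n \<Longrightarrow> B ! i \<noteq> B ! j" unfolding B_def n_def using bfl_facts(2)[OF N] by blast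
  have B0: "B ! 0 = rt N" unfolding B_def using bfl_facts(3)[OF N] .
  have mpos: "0 < m" unfolding m_def using bfl_facts(4)[OF M] .
  have nc: "ncorners N = n" unfolding ncorners_def n_def ..
  have bc: "\<And>j. bfl_corner N j = B ! (j - 1)" unfolding bfl_corner_def B_def ..
  show ?thesis
  proof (intro conjI impI)
    assume h: "1 \<le> k \<and> k + 2 \<le> l \<and> l \<le> ncorners N + 2"
    then have h1: "1 \<le> k" "k + 2 \<le> l" "l \<le> n + 2" using nc by auto
    have c_in: "bfl_corner N k \<in> hes N" using bc Bin h1 by simp
    have cI_in: "bfl_corner N (l - 2) \<in> hes N" using bc Bin h1 by simp
    have cL: "bfl_corner (R_op k N) l = (if l = k + 2 then Suc (fresh (hes N)) else B ! (l - 3))"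
      unfolding bfl_corner_def using R_corners(2)[OF N h1(1), of "l - 1"] h1 n_def B_def by (auto simp: numeral_3_eq_3)
    have cR: "bfl_corner (Ins_op M (l - 2) N) k = B ! (k - 1)"
      unfolding bfl_corner_def using I_corners(2)[OF N M, of "l - 2" "k - 1"] h1 n_def m_def B_def by auto
    show "map_iso (Ins_op M l (R_op k N)) (R_op k (Ins_op M (l - 2) N))"
    proof (rule master[OF N M c_in cI_in])
      show "let cL = bfl_corner (R_op k N) l; c = bfl_corner N k; cI = bfl_corner N (l - 2);
       cR = bfl_corner (Ins_op M (l - 2) N) k; x = fresh (hes N); zR = x + fresh (hes M); r = rt N in
       (cL = Suc x \<and> cI = c \<and> cR = c) \<or> (cL = cI \<and> cR = c \<and> cI \<noteq> c \<and> cI \<noteq> r)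
       \<or> (cL = x \<and> cI = r \<and> cR = zR \<and> c = r) \<or> (cL = x \<and> cI = r \<and> cR = c \<and> c \<noteq> r)
       \<or> (cL = c \<and> cI = c \<and> cR = zR \<and> c \<noteq> r)"
      proof (cases "l = k + 2")
        case True
        then show ?thesis unfolding Let_def cL cR bc using h1 by simp
      next
        case False
        have i1: "k - 1 < l - 3" "l - 3 < n" "0 < l - 3" using h1 False by arith+
        have "B ! (l - 3) \<noteq> B ! (k - 1)" using Bd[OF i1(1,2)] by metis
        moreover have "B ! (l - 3) \<noteq> rt N" using Bd[OF i1(3,2)] B0 by metis
        moreover have "l - 2 - 1 = l - 3" by simp
        ultimately show ?thesis unfolding Let_def cL cR bc using False by simp
      qed
    qed
  next
    assume h: "2 \<le> l \<and> l \<le> k + 1 \<and> k \<le> ncorners N"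
    then have h1: "2 \<le> l" "l \<le> k + 1" "k \<le> n" "1 \<le> k" using nc by auto
    have c_in: "bfl_corner N k \<in> hes N" using bc Bin h1 by simp
    have cI_in: "bfl_corner N (l - 1) \<in> hes N" using bc Bin h1 by simp
    have cL: "bfl_corner (R_op k N) l = (if l = 2 then fresh (hes N) else B ! (l - 2))"
      unfolding bfl_corner_def using R_corners(2)[OF N h1(4), of "l - 1"] h1 n_def B_def by (auto simp: numeral_2_eq_2)
    have cR: "bfl_corner (Ins_op M (l - 1) N) (k + 2 * msize M) =
        (if k = l - 1 then fresh (hes N) + fresh (hes M) else B ! (k - 1))"
    proof -
      have e: "k + 2 * msize M - 1 = k + m" using ms by simp
      have "bfl (Ins_op M (l - 1) N) ! (k + m) = (if k = l - 1 then fresh (hes N) + fresh (hes M) else B ! (k + m - m - 1))"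
        using I_corners(2)[OF N M, of "l - 1" "k + m"] h1 n_def m_def B_def mpos by auto
      then show ?thesis unfolding bfl_corner_def e by simp
    qed
    show "map_iso (Ins_op M l (R_op k N)) (R_op (k + 2 * msize M) (Ins_op M (l - 1) N))"
    proof (rule master[OF N M c_in cI_in])
      have lc: "bfl_corner N (l - 1) = B ! (l - 2)" using bc by (simp add: numeral_2_eq_2)
      show "let cL = bfl_corner (R_op k N) l; c = bfl_corner N k; cI = bfl_corner N (l - 1);
       cR = bfl_corner (Ins_op M (l - 1) N) (k + 2 * msize M); x = fresh (hes N); zR = x + fresh (hes M); r = rt N in
       (cL = Suc x \<and> cI = c \<and> cR = c) \<or> (cL = cI \<and> cR = c \<and> cI \<noteq> c \<and> cI \<noteq> r)
       \<or> (cL = x \<and> cI = r \<and> cR = zR \<and> c = r) \<or> (cL = x \<and> cI = r \<and> cR = c \<and> c \<noteq> r)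
       \<or> (cL = c \<and> cI = c \<and> cR = zR \<and> c \<noteq> r)"
      proof (cases "l = 2")
        case True
        show ?thesis
        proof (cases "k = 1")
          case True
          then show ?thesis unfolding Let_def cL cR lc using \<open>l = 2\<close> B0 bc by simp
        next
          case False
          have i1: "0 < k - 1" "k - 1 < n" using h1 False by arith+
          have "B ! (k - 1) \<noteq> rt N" using Bd[OF i1] B0 by metis
          then show ?thesis unfolding Let_def cL cR lc using \<open>l = 2\<close> B0 bc False by simp
        qed
      next
        case l2: False
        have i1: "0 < l - 2" "l - 2 < n" using h1 l2 by arith+
        have cIr: "B ! (l - 2) \<noteq> rt N" using Bd[OF i1] B0 by metis
        show ?thesis
        proof (cases "k = l - 1")
          case True
          have "l - 2 = k - 1" using True by simp
          then show ?thesis unfolding Let_def cL cR lc using l2 True cIr bc by simp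
        next
          case False
          have i2: "l - 2 < k - 1" "k - 1 < n" using h1 l2 False by arith+
          have "B ! (l - 2) \<noteq> B ! (k - 1)" using Bd[OF i2] by metis
          then show ?thesis unfolding Let_def cL cR lc using l2 False cIr bc by simp
        qed
      qed
    qed
  qed
qed


end
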